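(* In the nonparametric MAR regression model described in the context, let $h\in L_2(F)$ and consider the linear functional $E[h(\varepsilon)]$. Its canonical gradient is $$g^*(X,\delta Y,\delta)=\delta\big\{s^*(\varepsilon)+\ell(\varepsilon)t^*(X)\big\},$$ i.e. it is characterized by the direction $(u^*,s^*,t^*,w^* )=(0,s^*,t^*,0)$ in the tangent set, where $$s^*(z)=\frac1{E\delta}\Big\{h_0(z)+\sigma^2E[h_0(\varepsilon)\ell_0(\varepsilon)]\,\ell_0(z)\Big\},\quad z\in\mathbb R,\qquad t^*(x)=-\frac{\sigma^2}{E\delta}E[h_0(\varepsilon)\ell_0(\varepsilon)],\quad x\in[0,1]^m,$$ with $\sigma^2=E[\varepsilon^2]$, $h_0(z)=h(z)-E[h(\varepsilon)]-\frac{z}{\sigma^2}E[\varepsilon h(\varepsilon)]$, and $\ell_0(z)=\ell(z)-z/\sigma^2$.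
   Context: Model: $Y=r(X)+\varepsilon$ with $X\in[0,1]^m$ having distribution $G$, $\varepsilon$ independent of $X$ with mean zero, variance $\sigma^2$, distribution function $F$ and density $f$; $f$ is absolutely continuous with a.e. derivative $f'$, score $\ell=-f'/f$ and finite Fisher information $J=\int\ell^2 f<\infty$. The response indicator $\delta$ satisfies MAR: $P(\delta=1\mid X,Y)=\pi(X)$, $\pi:[0,1]^m\to(0,1]$. Observations are i.i.d. copies of $(X,\delta Y,\delta)$. No parametric model is imposed on $G$, $\pi$, $r$ (beyond smoothness) or $f$ (beyond mean zero and finite Fisher information). $G_1$ denotes the conditional distribution of $X$ given $\delta=1$ and $E_1$ expectation under $G_1$. Tangent structure: perturbations are indexed by $\gamma=(u,s,t,w)$ with $u\in L_{2,0}(G)$ (square integrable, mean zero under $G$), $s\in\mathcal S=\{s\in L_2(F):\int s f=0,\ \int z s(z)f(z)dz=0\}$, $t\in L_2(G_1)$, $w\in L_2(G_\pi)$ where $G_\pi(dx)=\pi(x)(1-\pi(x))G(dx)$; the corresponding score is $$d_\gamma(X,\delta Y,\delta)=u(X)+\delta\{s(\varepsilon)+\ell(\varepsilon)t(X)\}+\{\delta-\pi(X)\}w(X),$$ and the tangent space is the closure of $\{d_\gamma\}$. The functional $E[h(\varepsilon)]$ has gradient $h_0(\varepsilon)$ in the sense that perturbing $f$ to $f_{ns}=f(1+n^{-1/2}s)$ changes it at rate $n^{-1/2}E[h_0(\varepsilon)s(\varepsilon)]$. The canonical gradient is the element $g^*$ of the tangent space with $E[h_0(\varepsilon)s(\varepsilon)]=E[g^*d_\gamma]$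 for all $\gamma$. *)

theory Defs
  imports "HOL-Probability.Probability"
begin

definition L2 :: "'a measure \<Rightarrow> ('a \<Rightarrow> real) \<Rightarrow> bool" where
  "L2 M g \<longleftrightarrow> g \<in> borel_measurable M \<and> integrable M (\<lambda>x. (g x)^2)"

definition unit_cube :: "(real^'m) set" where
  "unit_cube = {x. \<forall>i. 0 \<le> x$i \<and> x$i \<le> 1}"

definition err_dist :: "(real \<Rightarrow> real) \<Rightarrow> real measure" where
  "err_dist f = density lborel (\<lambda>z. ennreal (f z))"

text \<open>Score of the error density: l = - f' / f (0 where f = 0).\<close>
definition score :: "(real \<Rightarrow> real) \<Rightarrow> (real \<Rightarrow> real) \<Rightarrow> real \<Rightarrow> real" where
  "score f f' z = - f' z / f z"

text \<open>Joint law of (X, delta, epsilon): X ~ G, P(delta=1|X)=pi(X), epsilon ~ F independent of (X,delta).\<close>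
definition joint_law :: "(real^'m) measure \<Rightarrow> (real^'m \<Rightarrow> real) \<Rightarrow> (real \<Rightarrow> real)
    \<Rightarrow> ((real^'m) \<times> bool \<times> real) measure" where
  "joint_law G \<pi> f = density (G \<Otimes>\<^sub>M (count_space UNIV \<Otimes>\<^sub>M lborel))
      (\<lambda>(x, d, z). ennreal ((if d then \<pi> x else 1 - \<pi> x) * f z))"

text \<open>E delta = int pi dG.\<close>
definition resp_prob :: "(real^'m) measure \<Rightarrow> (real^'m \<Rightarrow> real) \<Rightarrow> real" where
  "resp_prob G \<pi> = (\<integral>x. \<pi> x \<partial>G)"

text \<open>G_1: conditional distribution of X given delta = 1.\<close>
definition G1 :: "(real^'m) measure \<Rightarrow> (real^'m \<Rightarrow> real) \<Rightarrow> (real^'m) measure" where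
  "G1 G \<pi> = density G (\<lambda>x. ennreal (\<pi> x / resp_prob G \<pi>))"

definition Gpi :: "(real^'m) measure \<Rightarrow> (real^'m \<Rightarrow> real) \<Rightarrow> (real^'m) measure" where
  "Gpi G \<pi> = density G (\<lambda>x. ennreal (\<pi> x * (1 - \<pi> x)))"

definition S_set :: "(real \<Rightarrow> real) \<Rightarrow> (real \<Rightarrow> real) set" where
  "S_set f = {s. L2 (err_dist f) s \<and> (\<integral>z. s z \<partial>err_dist f) = 0
                 \<and> (\<integral>z. z * s z \<partial>err_dist f) = 0}"

definition tangent_index :: "(real^'m) measure \<Rightarrow> (real^'m \<Rightarrow> real) \<Rightarrow> (real \<Rightarrow> real)
    \<Rightarrow> ((real^'m \<Rightarrow> real) \<times> (real \<Rightarrow> real) \<times> (real^'m \<Rightarrow> real) \<times> (real^'m \<Rightarrow> real)) set" where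
  "tangent_index G \<pi> f = {(u, s, t, w). L2 G u \<and> (\<integral>x. u x \<partial>G) = 0 \<and> s \<in> S_set f
      \<and> L2 (G1 G \<pi>) t \<and> L2 (Gpi G \<pi>) w}"

text \<open>Score d_gamma(X, delta Y, delta) written as a function of (X, delta, epsilon).\<close>
definition d_score :: "(real \<Rightarrow> real) \<Rightarrow> (real^'m \<Rightarrow> real)
    \<Rightarrow> ((real^'m \<Rightarrow> real) \<times> (real \<Rightarrow> real) \<times> (real^'m \<Rightarrow> real) \<times> (real^'m \<Rightarrow> real))
    \<Rightarrow> (real^'m) \<times> bool \<times> real \<Rightarrow> real" where
  "d_score l \<pi> \<gamma> = (case \<gamma> of (u, s, t, w) \<Rightarrow>
     (\<lambda>(x, d, z). u x + (if d then s z + l z * t x else 0)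
                  + ((if d then 1 else 0) - \<pi> x) * w x))"

definition is_canonical_gradient :: "(real^'m) measure \<Rightarrow> (real^'m \<Rightarrow> real) \<Rightarrow> (real \<Rightarrow> real)
    \<Rightarrow> (real \<Rightarrow> real) \<Rightarrow> (real \<Rightarrow> real) \<Rightarrow> ((real^'m) \<times> bool \<times> real \<Rightarrow> real) \<Rightarrow> bool" where
  "is_canonical_gradient G \<pi> f l h0 g \<longleftrightarrow>
     L2 (joint_law G \<pi> f) g
   \<and> (\<forall>e>0. \<exists>\<gamma>\<in>tangent_index G \<pi> f. L2 (joint_law G \<pi> f) (d_score l \<pi> \<gamma>) \<and>
          (\<integral>\<omega>. (g \<omega> - d_score l \<pi> \<gamma> \<omega>)^2 \<partial>joint_law G \<pi> f) < e)
   \<and> (\<forall>\<gamma>\<in>tangent_index G \<pi> f.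
          (\<integral>\<omega>. h0 (snd (snd \<omega>)) * fst (snd \<gamma>) (snd (snd \<omega>)) \<partial>joint_law G \<pi> f)
        = (\<integral>\<omega>. g \<omega> * d_score l \<pi> \<gamma> \<omega> \<partial>joint_law G \<pi> f))"

definition err_var :: "(real \<Rightarrow> real) \<Rightarrow> real" where
  "err_var f = (\<integral>z. z^2 \<partial>err_dist f)"

definition h0_of :: "(real \<Rightarrow> real) \<Rightarrow> (real \<Rightarrow> real) \<Rightarrow> real \<Rightarrow> real" where
  "h0_of f h z = h z - (\<integral>e. h e \<partial>err_dist f) - z / err_var f * (\<integral>e. e * h e \<partial>err_dist f)"

definition l0_of :: "(real \<Rightarrow> real) \<Rightarrow> (real \<Rightarrow> real) \<Rightarrow> real \<Rightarrow> real" where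
  "l0_of f f' z = score f f' z - z / err_var f"

definition s_star :: "(real^'m) measure \<Rightarrow> (real^'m \<Rightarrow> real) \<Rightarrow> (real \<Rightarrow> real) \<Rightarrow> (real \<Rightarrow> real)
    \<Rightarrow> (real \<Rightarrow> real) \<Rightarrow> real \<Rightarrow> real" where
  "s_star G \<pi> f f' h z = (1 / resp_prob G \<pi>) *
     (h0_of f h z + err_var f * (\<integral>e. h0_of f h e * l0_of f f' e \<partial>err_dist f) * l0_of f f' z)"

definition t_star :: "(real^'m) measure \<Rightarrow> (real^'m \<Rightarrow> real) \<Rightarrow> (real \<Rightarrow> real) \<Rightarrow> (real \<Rightarrow> real)
    \<Rightarrow> (real \<Rightarrow> real) \<Rightarrow> real^'m \<Rightarrow> real" where
  "t_star G \<pi> f f' h x = - err_var f / resp_prob G \<pi> * (\<integral>e. h0_of f h e * l0_of f f' e \<partial>err_dist f)"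

definition g_star :: "(real^'m) measure \<Rightarrow> (real^'m \<Rightarrow> real) \<Rightarrow> (real \<Rightarrow> real) \<Rightarrow> (real \<Rightarrow> real)
    \<Rightarrow> (real \<Rightarrow> real) \<Rightarrow> (real^'m) \<times> bool \<times> real \<Rightarrow> real" where
  "g_star G \<pi> f f' h = (\<lambda>(x, d, z). if d then s_star G \<pi> f f' h z + score f f' z * t_star G \<pi> f f' h x else 0)"

end

theory Submission
  imports Defs
begin

lemma ac_lint:
  fixes f g :: "real \<Rightarrow> real"
  assumes AC: "\<And>a b. a \<le> b \<Longrightarrow> g absolutely_integrable_on {a..b} \<and> integral {a..b} g = f b - f a"
    and "a \<le> b"
  shows "set_integrable lebesgue {a..b} g" "(LINT x:{a..b}|lebesgue. g x) = f b - f a"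
  using AC[OF assms(2)] by (auto simp: set_lebesgue_integral_eq_integral(2))

lemma ac_cont:
  fixes f g :: "real \<Rightarrow> real"
  assumes AC: "\<And>a b. a \<le> b \<Longrightarrow> g absolutely_integrable_on {a..b} \<and> integral {a..b} g = f b - f a"
  shows "continuous_on UNIV f"
proof -
  have "isCont f x" for x
  proof -
    have int: "g integrable_on {x-1..x+1}"
      using AC[of "x-1" "x+1"] set_lebesgue_integral_eq_integral(1) by auto
    have c: "continuous_on {x-1..x+1} (\<lambda>y. f (x-1) + integral {x-1..y} g)"
      by (intro continuous_on_add continuous_on_const indefinite_integral_continuous_1[OF int])
    have eq: "f (x-1) + integral {x-1..y} g = f y" if "y \<in> {x-1..x+1}" for y
    proof -
      have "x - 1 \<le> y" using that by simp
      from AC[OF this] show ?thesis by simp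
    qed
    have "continuous_on {x-1..x+1} f"
      using continuous_on_eq[OF c eq] .
    then show ?thesis
      by (rule continuous_on_interior) (auto simp: interior_atLeastAtMost_real)
  qed
  then show ?thesis by (simp add: continuous_on_eq_continuous_at)
qed


lemma sint_open_closed:
  fixes g :: "real \<Rightarrow> real"
  assumes "set_integrable lebesgue {a..b} g"
  shows "(LINT x:{a<..<b}|lebesgue. g x) = (LINT x:{a..b}|lebesgue. g x)"
proof -
  have i2: "set_integrable lebesgue {a<..<b} g"
    by (rule set_integrable_subset[OF assms]) auto
  have null: "{a, b} \<in> null_sets lebesgue" by simp
  show ?thesis
  proof (rule set_integral_cong_set)
    show "set_borel_measurable lebesgue {a<..<b} g" "set_borel_measurable lebesgue {a..b} g"
      using assms i2 unfolding set_borel_measurable_def set_integrable_def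
      by (auto intro: borel_measurable_integrable)
    show "AE x in lebesgue. (x \<in> {a..b}) = (x \<in> {a<..<b})"
      using AE_not_in[OF null] by eventually_elim auto
  qed
qed

lemma core_zero:
  fixes f g :: "real \<Rightarrow> real"
  assumes AC: "\<And>a b. a \<le> b \<Longrightarrow> g absolutely_integrable_on {a..b} \<and> integral {a..b} g = f b - f a"
    and cont: "continuous_on UNIV f"
    and cd: "c \<le> d" and fc: "f c = 0" and fd: "f d = 0"
  shows "(LINT x:({c..d} \<inter> {x. f x = 0})|lebesgue. g x) = 0"
proof -
  define K where "K = {c..d} \<inter> {x. f x = 0}"
  have clK: "closed K" unfolding K_def
    by (intro closed_Int closed_atLeastAtMost closed_Collect_eq cont continuous_on_const)
  have cK: "c \<in> K" "d \<in> K" using cd fc fd by (auto simp: K_def)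
  define D where "D = {c..d} - K"
  define L where "L x = Sup {y\<in>K. y \<le> x}" for x
  define R where "R x = Inf {y\<in>K. x \<le> y}" for x
  have LK: "L x \<in> K \<and> L x < x" if "x \<in> D" for x
  proof -
    have "{y\<in>K. y \<le> x} = K \<inter> {..x}" by auto
    hence cl: "closed {y\<in>K. y \<le> x}" using clK by auto
    have ne: "{y\<in>K. y \<le> x} \<noteq> {}" using cK that by (auto simp: D_def)
    have bd: "bdd_above {y\<in>K. y \<le> x}" by (auto intro: bdd_aboveI)
    have "L x \<in> {y\<in>K. y \<le> x}" unfolding L_def by (rule closed_contains_Sup[OF ne bd cl])
    moreover have "x \<notin> K" using that by (auto simp: D_def)
    ultimately show ?thesis by (cases "L x = x") auto
  qed
  have RK: "R x \<in> K \<and> x < R x" if "x \<in> D" for x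
  proof -
    have "{y\<in>K. x \<le> y} = K \<inter> {x..}" by auto
    hence cl: "closed {y\<in>K. x \<le> y}" using clK by auto
    have ne: "{y\<in>K. x \<le> y} \<noteq> {}" using cK that by (auto simp: D_def)
    have bd: "bdd_below {y\<in>K. x \<le> y}" by (auto intro: bdd_belowI)
    have "R x \<in> {y\<in>K. x \<le> y}" unfolding R_def by (rule closed_contains_Inf[OF ne bd cl])
    moreover have "x \<notin> K" using that by (auto simp: D_def)
    ultimately show ?thesis by (cases "R x = x") auto
  qed
  have gap: "y \<notin> K" if "x \<in> D" "L x < y" "y < R x" for x y
  proof
    assume yK: "y \<in> K"
    show False
    proof (cases "y \<le> x")
      case True
      hence "y \<le> L x" unfolding L_def using yK by (intro cSup_upper) (auto intro: bdd_aboveI)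
      thus False using that by simp
    next
      case False
      hence "R x \<le> y" unfolding R_def using yK by (intro cInf_lower) (auto intro: bdd_belowI)
      thus False using that by simp
    qed
  qed
  have Ksub: "K \<subseteq> {c..d}" by (auto simp: K_def)
  have CD: "{L x<..<R x} \<subseteq> D" if "x \<in> D" for x
  proof
    fix y assume y: "y \<in> {L x<..<R x}"
    have "c \<le> L x" "R x \<le> d" using LK[OF that] RK[OF that] Ksub by auto
    thus "y \<in> D" using y gap[OF that] by (auto simp: D_def)
  qed
  have same: "L y = L x \<and> R y = R x" if x: "x \<in> D" and y: "y \<in> {L x<..<R x}" for x y
  proof -
    have "{z\<in>K. z \<le> y} = {z\<in>K. z \<le> x}"
    proof (intro set_eqI iffI)
      fix z assume z: "z \<in> {z\<in>K. z \<le> y}"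
      show "z \<in> {z\<in>K. z \<le> x}"
      proof (rule ccontr)
        assume "z \<notin> {z\<in>K. z \<le> x}"
        hence "x < z" using z by auto
        hence "L x < z" "z < R x" using LK[OF x] y z by auto
        thus False using gap[OF x] z by auto
      qed
    next
      fix z assume z: "z \<in> {z\<in>K. z \<le> x}"
      have "x < R x" using RK[OF x] by auto
      have "z \<le> L x" unfolding L_def using z by (intro cSup_upper) (auto intro: bdd_aboveI)
      thus "z \<in> {z\<in>K. z \<le> y}" using z y by auto
    qed
    moreover have "{z\<in>K. y \<le> z} = {z\<in>K. x \<le> z}"
    proof (intro set_eqI iffI)
      fix z assume z: "z \<in> {z\<in>K. y \<le> z}"
      show "z \<in> {z\<in>K. x \<le> z}"
      proof (rule ccontr)
        assume "z \<notin> {z\<in>K. x \<le> z}"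
        hence "z < x" using z by auto
        hence "L x < z" "z < R x" using RK[OF x] y z by auto
        thus False using gap[OF x] z by auto
      qed
    next
      fix z assume z: "z \<in> {z\<in>K. x \<le> z}"
      have "R x \<le> z" unfolding R_def using z by (intro cInf_lower) (auto intro: bdd_belowI)
      thus "z \<in> {z\<in>K. y \<le> z}" using z y by auto
    qed
    ultimately show ?thesis unfolding L_def R_def by simp
  qed
  have int_cd: "set_integrable lebesgue {c..d} g" using ac_lint[OF AC cd] by simp
  have sub_int: "set_integrable lebesgue S g" if "S \<in> sets lebesgue" "S \<subseteq> {c..d}" for S
    by (rule set_integrable_subset[OF int_cd that])
  have Cint: "(LINT y:{L x<..<R x}|lebesgue. g y) = 0" if x: "x \<in> D" for x
  proof -
    have le: "L x \<le> R x" using LK[OF x] RK[OF x] by auto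
    have "(LINT y:{L x<..<R x}|lebesgue. g y) = (LINT y:{L x..R x}|lebesgue. g y)"
      by (rule sint_open_closed[OF ac_lint(1)[OF AC le]])
    also have "\<dots> = f (R x) - f (L x)" by (rule ac_lint(2)[OF AC le])
    also have "\<dots> = 0" using LK[OF x] RK[OF x] by (simp add: K_def)
    finally show ?thesis .
  qed
  define q where "q = from_nat_into (\<rat> :: real set)"
  define C where "C i = (if q i \<in> D then {L (q i)<..<R (q i)} else {})" for i
  define V where "V N = (\<Union>i<N. C i)" for N
  have C_meas: "C i \<in> sets lebesgue" for i by (simp add: C_def)
  have V_meas: "V N \<in> sets lebesgue" for N unfolding V_def using C_meas by auto
  have CsubD: "C i \<subseteq> D" for i using CD by (auto simp: C_def)
  have VsubD: "V N \<subseteq> D" for N using CsubD by (auto simp: V_def)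
  have Dsub: "D \<subseteq> {c..d}" by (auto simp: D_def)
  have Dmeas: "D \<in> sets lebesgue" unfolding D_def K_def
    using clK by (auto simp: K_def intro!: sets.Diff borel_closed)
  have V0: "(LINT x:V N|lebesgue. g x) = 0" for N
  proof (induction N)
    case 0 thus ?case by (simp add: V_def set_lebesgue_integral_def)
  next
    case (Suc N)
    have VS: "V (Suc N) = C N \<union> V N" by (auto simp: V_def lessThan_Suc)
    show ?case
    proof (cases "q N \<in> D")
      case False
      thus ?thesis using Suc VS by (simp add: C_def)
    next
      case qD: True
      show ?thesis
      proof (cases "q N \<in> V N")
        case True
        then obtain i where i: "i < N" "q N \<in> C i" by (auto simp: V_def)
        hence qi: "q i \<in> D" "q N \<in> {L (q i)<..<R (q i)}" by (auto simp: C_def split: if_splits)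
        have "C N = C i" using same[OF qi] qi qD by (simp add: C_def)
        hence "C N \<subseteq> V N" using i by (auto simp: V_def)
        hence "V (Suc N) = V N" using VS by auto
        thus ?thesis using Suc by simp
      next
        case False
        have disj: "C N \<inter> V N = {}"
        proof (rule ccontr)
          assume "C N \<inter> V N \<noteq> {}"
          then obtain y i where y: "y \<in> C N" "i < N" "y \<in> C i" by (auto simp: V_def)
          hence qi: "q i \<in> D" "y \<in> {L (q i)<..<R (q i)}" by (auto simp: C_def split: if_splits)
          have yN: "y \<in> {L (q N)<..<R (q N)}" using y qD by (simp add: C_def)
          have "L y = L (q i) \<and> R y = R (q i)" by (rule same[OF qi])
          moreover have "L y = L (q N) \<and> R y = R (q N)" by (rule same[OF qD yN])
          moreover have "q N \<in> {L (q N)<..<R (q N)}" using LK[OF qD] RK[OF qD] by auto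
          ultimately have "q N \<in> C i" using qi by (simp add: C_def)
          thus False using False y by (auto simp: V_def)
        qed
        have iC: "set_integrable lebesgue (C N) g"
          by (rule sub_int[OF C_meas]) (use CsubD Dsub in blast)
        have iV: "set_integrable lebesgue (V N) g"
          by (rule sub_int[OF V_meas]) (use VsubD Dsub in blast)
        have "(LINT x:V (Suc N)|lebesgue. g x) = (LINT x:C N|lebesgue. g x) + (LINT x:V N|lebesgue. g x)"
          unfolding VS by (rule set_integral_Un[OF disj iC iV])
        also have "(LINT x:C N|lebesgue. g x) = 0" using Cint[OF qD] qD by (simp add: C_def)
        finally show ?thesis using Suc by simp
      qed
    qed
  qed
  have UV: "(\<Union>N. V N) = D"
  proof
    show "(\<Union>N. V N) \<subseteq> D" using VsubD by auto
    show "D \<subseteq> (\<Union>N. V N)"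
    proof
      fix x assume x: "x \<in> D"
      have LR: "L x < R x" using LK[OF x] RK[OF x] by linarith
      from Rats_dense_in_real[OF LR] obtain r where r: "r \<in> \<rat>" "L x < r" "r < R x" by blast
      from from_nat_into_surj[OF countable_rat r(1)] obtain i where i: "q i = r" unfolding q_def by blast
      have rI: "r \<in> {L x<..<R x}" using r by simp
      have rD: "r \<in> D" using CD[OF x] rI by (rule subsetD)
      have "L r = L x \<and> R r = R x" by (rule same[OF x rI])
      hence "x \<in> C i" using i rD LK[OF x] RK[OF x] by (simp add: C_def)
      hence "x \<in> V (Suc i)" unfolding V_def by blast
      thus "x \<in> (\<Union>N. V N)" by blast
    qed
  qed
  have "(\<lambda>N. LINT x:V N|lebesgue. g x) \<longlonglongrightarrow> (LINT x:(\<Union>N. V N)|lebesgue. g x)"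
  proof (rule set_integral_cont_up)
    show "incseq V" by (rule incseq_SucI) (auto simp: V_def lessThan_Suc)
    show "set_integrable lebesgue (\<Union>N. V N) g" unfolding UV by (rule sub_int[OF Dmeas Dsub])
  qed (rule V_meas)
  hence D0: "(LINT x:D|lebesgue. g x) = 0" using V0 UV by (simp add: LIMSEQ_const_iff)
  have Kmeas: "K \<in> sets lebesgue" using clK by (auto intro: borel_closed)
  have "(LINT x:{c..d}|lebesgue. g x) = (LINT x:K|lebesgue. g x) + (LINT x:D|lebesgue. g x)"
  proof -
    have "{c..d} = K \<union> D" using Ksub by (auto simp: D_def)
    moreover have "K \<inter> D = {}" by (auto simp: D_def)
    moreover have "set_integrable lebesgue K g" by (rule sub_int[OF Kmeas Ksub])
    moreover have "set_integrable lebesgue D g" by (rule sub_int[OF Dmeas Dsub])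
    ultimately show ?thesis by (simp add: set_integral_Un)
  qed
  moreover have "(LINT x:{c..d}|lebesgue. g x) = 0" using ac_lint(2)[OF AC cd] fc fd by simp
  ultimately show ?thesis using D0 by (simp add: K_def)
qed


lemma zero_set_int:
  fixes f g :: "real \<Rightarrow> real"
  assumes AC: "\<And>a b. a \<le> b \<Longrightarrow> g absolutely_integrable_on {a..b} \<and> integral {a..b} g = f b - f a"
    and cont: "continuous_on UNIV f"
    and cd: "c \<le> d"
  shows "(LINT x:({c..d} \<inter> {x. f x = 0})|lebesgue. g x) = 0"
proof (cases "{c..d} \<inter> {x. f x = 0} = {}")
  case True thus ?thesis by (simp add: set_lebesgue_integral_def)
next
  case False
  define K where "K = {c..d} \<inter> {x. f x = 0}"
  have clK: "closed K" unfolding K_def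
    by (intro closed_Int closed_atLeastAtMost closed_Collect_eq cont continuous_on_const)
  have ne: "K \<noteq> {}" using False by (simp add: K_def)
  have c'K: "Inf K \<in> K" by (rule closed_contains_Inf[OF ne _ clK]) (auto simp: K_def intro: bdd_belowI)
  have d'K: "Sup K \<in> K" by (rule closed_contains_Sup[OF ne _ clK]) (auto simp: K_def intro: bdd_aboveI)
  have le: "Inf K \<le> Sup K" using ne by (intro cInf_le_cSup) (auto simp: K_def intro: bdd_belowI bdd_aboveI)
  have eq: "K = {Inf K..Sup K} \<inter> {x. f x = 0}"
  proof
    show "K \<subseteq> {Inf K..Sup K} \<inter> {x. f x = 0}"
      by (auto simp: K_def intro!: cInf_lower cSup_upper intro: bdd_belowI bdd_aboveI)
    show "{Inf K..Sup K} \<inter> {x. f x = 0} \<subseteq> K" using c'K d'K by (auto simp: K_def)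
  qed
  have "(LINT x:({Inf K..Sup K} \<inter> {x. f x = 0})|lebesgue. g x) = 0"
    by (rule core_zero[OF AC cont le]) (use c'K d'K in \<open>auto simp: K_def\<close>)
  thus ?thesis using eq by (simp add: K_def)
qed

lemma k_int:
  fixes f g :: "real \<Rightarrow> real"
  assumes AC: "\<And>a b. a \<le> b \<Longrightarrow> g absolutely_integrable_on {a..b} \<and> integral {a..b} g = f b - f a"
    and cont: "continuous_on UNIV f"
    and cd: "c \<le> d"
  shows "set_integrable lebesgue {c..d} (\<lambda>x. if f x = 0 then 0 else g x)"
    "(LINT x:{c..d}|lebesgue. (if f x = 0 then 0 else g x)) = f d - f c"
proof -
  define Z where "Z = {x. f x = 0}"
  have clZ: "closed Z" unfolding Z_def
    by (intro closed_Collect_eq cont continuous_on_const)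
  have Zm: "Z \<in> sets lebesgue" using clZ by (auto intro: borel_closed)
  have i1: "set_integrable lebesgue {c..d} g" using ac_lint[OF AC cd] by simp
  have i2: "set_integrable lebesgue ({c..d} \<inter> Z) g"
    by (rule set_integrable_subset[OF i1]) (use Zm in auto)
  have ext: "(\<lambda>x. indicator {c..d} x *\<^sub>R (if f x = 0 then 0 else g x)) =
      (\<lambda>x. indicator {c..d} x *\<^sub>R g x - indicator ({c..d} \<inter> Z) x *\<^sub>R g x)"
    by (auto simp: Z_def indicator_def fun_eq_iff)
  show "set_integrable lebesgue {c..d} (\<lambda>x. if f x = 0 then 0 else g x)"
    using i1 i2 unfolding set_integrable_def ext by (intro Bochner_Integration.integrable_diff)
  have "(LINT x:{c..d}|lebesgue. (if f x = 0 then 0 else g x)) =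
      (LINT x:{c..d}|lebesgue. g x) - (LINT x:({c..d} \<inter> Z)|lebesgue. g x)"
    using i1 i2 unfolding set_lebesgue_integral_def set_integrable_def ext
    by (rule Bochner_Integration.integral_diff)
  also have "(LINT x:({c..d} \<inter> Z)|lebesgue. g x) = 0"
    unfolding Z_def by (rule zero_set_int[OF AC cont cd])
  finally show "(LINT x:{c..d}|lebesgue. (if f x = 0 then 0 else g x)) = f d - f c"
    using ac_lint(2)[OF AC cd] by simp
qed


lemma prod_int:
  fixes a :: "'a \<Rightarrow> real" and b :: "'b \<Rightarrow> real"
  assumes sM: "sigma_finite_measure M" and sN: "sigma_finite_measure N"
    and ia: "integrable M a" and ib: "integrable N b"
  shows "integrable (M \<Otimes>\<^sub>M N) (\<lambda>z. a (fst z) * b (snd z))"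
    "(\<integral>z. a (fst z) * b (snd z) \<partial>(M \<Otimes>\<^sub>M N)) = (\<integral>x. a x \<partial>M) * (\<integral>y. b y \<partial>N)"
proof -
  interpret P: pair_sigma_finite M N using sM sN by (simp add: pair_sigma_finite_def)
  have ma: "a \<in> borel_measurable M" and mb: "b \<in> borel_measurable N" using ia ib by auto
  have meas: "(\<lambda>z. a (fst z) * b (snd z)) \<in> borel_measurable (M \<Otimes>\<^sub>M N)"
    using ma mb by measurable
  have "(\<integral>\<^sup>+ z. ennreal (norm (a (fst z) * b (snd z))) \<partial>(M \<Otimes>\<^sub>M N))
      = (\<integral>\<^sup>+ x. \<integral>\<^sup>+ y. ennreal (norm (a x)) * ennreal (norm (b y)) \<partial>N \<partial>M)"
  proof -
    have mm: "(\<lambda>z. ennreal (norm (a (fst z) * b (snd z)))) \<in> borel_measurable (M \<Otimes>\<^sub>M N)"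
      using meas by measurable
    show ?thesis
      using sigma_finite_measure.nn_integral_fst[OF sN mm]
      by (simp add: norm_mult ennreal_mult abs_mult)
  qed
  also have "\<dots> = (\<integral>\<^sup>+ x. ennreal (norm (a x)) * (\<integral>\<^sup>+ y. ennreal (norm (b y)) \<partial>N) \<partial>M)"
    by (intro nn_integral_cong nn_integral_cmult) (use mb in auto)
  also have "\<dots> = (\<integral>\<^sup>+ x. ennreal (norm (a x)) \<partial>M) * (\<integral>\<^sup>+ y. ennreal (norm (b y)) \<partial>N)"
    by (rule nn_integral_multc) (use ma in auto)
  also have "\<dots> < \<infinity>" using ia ib
    by (simp add: integrable_iff_bounded ennreal_mult_less_top)
  finally show int: "integrable (M \<Otimes>\<^sub>M N) (\<lambda>z. a (fst z) * b (snd z))"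
    using meas by (simp add: integrable_iff_bounded)
  have "(\<integral>z. a (fst z) * b (snd z) \<partial>(M \<Otimes>\<^sub>M N)) = (\<integral>x. \<integral>y. a x * b y \<partial>N \<partial>M)"
    using P.integral_fst'[OF int] by simp
  also have "\<dots> = (\<integral>x. a x * (\<integral>y. b y \<partial>N) \<partial>M)" by simp
  also have "\<dots> = (\<integral>x. a x \<partial>M) * (\<integral>y. b y \<partial>N)" by simp
  finally show "(\<integral>z. a (fst z) * b (snd z) \<partial>(M \<Otimes>\<^sub>M N)) = (\<integral>x. a x \<partial>M) * (\<integral>y. b y \<partial>N)" .
qed


lemma ind_int: "integrable lborel (indicator {a..b::real} :: real \<Rightarrow> real)"
  by (rule integrable_real_indicator) (auto simp: emeasure_lborel_Icc_eq)

lemma ibp: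
  fixes f k :: "real \<Rightarrow> real"
  assumes km: "k \<in> borel_measurable borel" and fm: "f \<in> borel_measurable borel"
    and ik: "\<And>c d. c \<le> d \<Longrightarrow> integrable lborel (\<lambda>x. indicator {c..d} x * k x)"
    and kint: "\<And>c d. c \<le> d \<Longrightarrow> (\<integral>x. indicator {c..d} x * k x \<partial>lborel) = f d - f c"
    and iff: "\<And>c d. integrable lborel (\<lambda>x. indicator {c..d} x * f x)"
    and ab: "a \<le> b"
  shows "(\<integral>x. indicator {a..b} x * (x * k x) \<partial>lborel) = b * f b - a * f a - (\<integral>x. indicator {a..b} x * f x \<partial>lborel)"
proof -

  define H where "H y z = indicator {a..b} y * (indicator {a..b} z * (if y \<le> z then 1 else 0)) * k z" for y z :: real
  have Hm: "(\<lambda>(y,z). H y z) \<in> borel_measurable (lborel \<Otimes>\<^sub>M lborel)"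
    unfolding H_def using km by measurable
  have bint: "integrable (lborel \<Otimes>\<^sub>M lborel) (\<lambda>p. indicator {a..b} (fst p) * \<bar>indicator {a..b} (snd p) * k (snd p)\<bar>)"
    by (rule prod_int(1)[of lborel lborel "indicator {a..b}" "\<lambda>z. \<bar>indicator {a..b} z * k z\<bar>"])
       (auto intro: ind_int ik[OF ab] lborel.sigma_finite_measure_axioms)
  have Hint: "integrable (lborel \<Otimes>\<^sub>M lborel) (\<lambda>(y,z). H y z)"
  proof (rule Bochner_Integration.integrable_bound[OF bint Hm])
    show "AE p in lborel \<Otimes>\<^sub>M lborel. norm (case p of (y, z) \<Rightarrow> H y z)
        \<le> norm (indicator {a..b} (fst p) * \<bar>indicator {a..b} (snd p) * k (snd p)\<bar>)"
      by (intro AE_I2) (auto simp: H_def indicator_def abs_mult)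
  qed
  have F: "(\<integral>z. (\<integral>y. H y z \<partial>lborel) \<partial>lborel) = (\<integral>y. (\<integral>z. H y z \<partial>lborel) \<partial>lborel)"
    by (rule lborel_pair.Fubini_integral[OF Hint])
  have in1: "(\<integral>y. H y z \<partial>lborel) = indicator {a..b} z * k z * z - a * (indicator {a..b} z * k z)" for z
  proof (cases "z \<in> {a..b}")
    case True
    have "(\<lambda>y. H y z) = (\<lambda>y. indicator {a..z} y * k z)"
      using True by (auto simp: H_def indicator_def fun_eq_iff)
    hence "(\<integral>y. H y z \<partial>lborel) = measure lborel {a..z} * k z" by simp
    thus ?thesis using True by (simp add: algebra_simps)
  next
    case False
    hence "(\<lambda>y. H y z) = (\<lambda>y. 0)" by (auto simp: H_def indicator_def fun_eq_iff)
    thus ?thesis using False by simp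
  qed
  have in2: "(\<integral>z. H y z \<partial>lborel) = indicator {a..b} y * f b - indicator {a..b} y * f y" for y
  proof (cases "y \<in> {a..b}")
    case True
    have "(\<lambda>z. H y z) = (\<lambda>z. indicator {y..b} z * k z)"
      using True by (auto simp: H_def indicator_def fun_eq_iff)
    hence "(\<integral>z. H y z \<partial>lborel) = f b - f y" using kint[of y b] True by simp
    thus ?thesis using True by simp
  next
    case False
    hence "(\<lambda>z. H y z) = (\<lambda>z. 0)" by (auto simp: H_def indicator_def fun_eq_iff)
    thus ?thesis using False by simp
  qed
  have ixk: "integrable lborel (\<lambda>x. indicator {a..b} x * (x * k x))"
  proof (rule Bochner_Integration.integrable_bound)
    show "integrable lborel (\<lambda>x. (\<bar>a\<bar> + \<bar>b\<bar>) * (indicator {a..b} x * k x))"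
      using ik[OF ab] by simp
    show "(\<lambda>x. indicator {a..b} x * (x * k x)) \<in> borel_measurable lborel" using km by measurable
    show "AE x in lborel. norm (indicator {a..b} x * (x * k x)) \<le> norm ((\<bar>a\<bar> + \<bar>b\<bar>) * (indicator {a..b} x * k x))"
    proof (intro AE_I2)
      fix x
      show "norm (indicator {a..b} x * (x * k x)) \<le> norm ((\<bar>a\<bar> + \<bar>b\<bar>) * (indicator {a..b} x * k x))"
      proof (cases "x \<in> {a..b}")
        case True
        hence "\<bar>x\<bar> \<le> \<bar>a\<bar> + \<bar>b\<bar>" by auto
        hence "\<bar>x\<bar> * \<bar>k x\<bar> \<le> (\<bar>a\<bar> + \<bar>b\<bar>) * \<bar>k x\<bar>" by (rule mult_right_mono) simp
        thus ?thesis using True by (simp add: abs_mult)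
      qed simp
    qed
  qed
  have "(\<integral>z. (\<integral>y. H y z \<partial>lborel) \<partial>lborel) = (\<integral>x. indicator {a..b} x * (x * k x) \<partial>lborel) - a * (f b - f a)"
  proof -
    have "(\<integral>z. (\<integral>y. H y z \<partial>lborel) \<partial>lborel) = (\<integral>z. indicator {a..b} z * k z * z - a * (indicator {a..b} z * k z) \<partial>lborel)"
      by (simp add: in1)
    also have "\<dots> = (\<integral>z. indicator {a..b} z * k z * z \<partial>lborel) - (\<integral>z. a * (indicator {a..b} z * k z) \<partial>lborel)"
      by (rule Bochner_Integration.integral_diff) (use ixk ik[OF ab] in \<open>auto simp: mult_ac\<close>)
    also have "(\<integral>z. indicator {a..b} z * k z * z \<partial>lborel) = (\<integral>x. indicator {a..b} x * (x * k x) \<partial>lborel)"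
      by (simp add: mult_ac)
    also have "(\<integral>z. a * (indicator {a..b} z * k z) \<partial>lborel) = a * (f b - f a)"
      using kint[OF ab] by simp
    finally show ?thesis .
  qed
  moreover have "(\<integral>y. (\<integral>z. H y z \<partial>lborel) \<partial>lborel) = (b - a) * f b - (\<integral>x. indicator {a..b} x * f x \<partial>lborel)"
  proof -
    have "(\<integral>y. (\<integral>z. H y z \<partial>lborel) \<partial>lborel) = (\<integral>y. indicator {a..b} y * f b - indicator {a..b} y * f y \<partial>lborel)"
      by (simp add: in2)
    also have "\<dots> = (\<integral>y. indicator {a..b} y * f b \<partial>lborel) - (\<integral>y. indicator {a..b} y * f y \<partial>lborel)"
      by (rule Bochner_Integration.integral_diff) (use iff ind_int in auto)
    also have "(\<integral>y. indicator {a..b} y * f b \<partial>lborel) = (b - a) * f b"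
      using ab by simp
    finally show ?thesis .
  qed
  ultimately show ?thesis using F by (simp add: algebra_simps)
qed


lemma lim_zero:
  fixes \<phi> :: "real \<Rightarrow> real"
  assumes int: "integrable lborel \<phi>" and lim: "(\<phi> \<longlongrightarrow> L) at_top"
  shows "L = 0"
proof (rule ccontr)
  assume L: "L \<noteq> 0"
  have "((\<lambda>x. \<bar>\<phi> x\<bar>) \<longlongrightarrow> \<bar>L\<bar>) at_top" using tendsto_rabs[OF lim] .
  moreover have "\<bar>L\<bar> / 2 < \<bar>L\<bar>" using L by simp
  ultimately have "eventually (\<lambda>x. \<bar>L\<bar> / 2 < \<bar>\<phi> x\<bar>) at_top" by (rule order_tendstoD)
  then obtain B where B: "\<And>x. x \<ge> B \<Longrightarrow> \<bar>L\<bar> / 2 < \<bar>\<phi> x\<bar>" by (auto simp: eventually_at_top_linorder)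
  define I where "I = (\<integral>x. \<bar>\<phi> x\<bar> \<partial>lborel)"
  have I0: "0 \<le> I" unfolding I_def by simp
  define n where "n = 2 * I / \<bar>L\<bar> + 1"
  have n0: "0 \<le> n" using I0 L by (simp add: n_def)
  have "(\<integral>x. indicator {B..B+n} x * (\<bar>L\<bar> / 2) \<partial>lborel) \<le> I"
    unfolding I_def
  proof (rule integral_mono)
    show "integrable lborel (\<lambda>x. indicator {B..B + n} x * (\<bar>L\<bar> / 2))"
      by (intro integrable_mult_left integrable_real_indicator) (auto simp: emeasure_lborel_Icc_eq)
    show "integrable lborel (\<lambda>x. \<bar>\<phi> x\<bar>)" using int by simp
    fix x show "indicator {B..B + n} x * (\<bar>L\<bar> / 2) \<le> \<bar>\<phi> x\<bar>"
      using B[of x] by (auto simp: indicator_def)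
  qed
  moreover have "(\<integral>x. indicator {B..B+n} x * (\<bar>L\<bar> / 2) \<partial>lborel) = n * (\<bar>L\<bar> / 2)"
    using n0 by simp
  moreover have "n * (\<bar>L\<bar> / 2) = I + \<bar>L\<bar> / 2" using L by (simp add: n_def field_simps)
  ultimately show False using L by simp
qed

lemma lim_zero_bot:
  fixes \<phi> :: "real \<Rightarrow> real"
  assumes int: "integrable lborel \<phi>" and lim: "(\<phi> \<longlongrightarrow> L) at_bot"
  shows "L = 0"
proof (rule lim_zero)
  show "integrable lborel (\<lambda>x. \<phi> (- x))"
    using lborel_integrable_real_affine_iff[of "-1" \<phi> 0] int by simp
  show "((\<lambda>x. \<phi> (- x)) \<longlongrightarrow> L) at_top"
    using lim by (simp add: filterlim_at_bot_mirror)
qed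

lemma tail_top:
  fixes \<psi> :: "real \<Rightarrow> real"
  assumes int: "integrable lborel \<psi>"
  shows "((\<lambda>t. \<integral>x. indicator {c..t} x * \<psi> x \<partial>lborel) \<longlongrightarrow> (\<integral>x. indicator {c..} x * \<psi> x \<partial>lborel)) at_top"
proof (rule integral_dominated_convergence_at_top[where w="\<lambda>x. \<bar>\<psi> x\<bar>"])
  have m: "\<psi> \<in> borel_measurable lborel" using int by auto
  show "(\<lambda>x. indicator {c..} x * \<psi> x) \<in> borel_measurable lborel" using m by measurable
  show "(\<lambda>x. indicator {c..t} x * \<psi> x) \<in> borel_measurable lborel" for t using m by measurable
  show "integrable lborel (\<lambda>x. \<bar>\<psi> x\<bar>)" using int by simp
  show "AE x in lborel. ((\<lambda>t. indicator {c..t} x * \<psi> x) \<longlongrightarrow> indicator {c..} x * \<psi> x) at_top"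
  proof (intro AE_I2)
    fix x
    have "eventually (\<lambda>t. indicator {c..t} x * \<psi> x = indicator {c..} x * \<psi> x) at_top"
      using eventually_ge_at_top[of x] by eventually_elim (auto simp: indicator_def)
    thus "((\<lambda>t. indicator {c..t} x * \<psi> x) \<longlongrightarrow> indicator {c..} x * \<psi> x) at_top"
      by (rule tendsto_eventually[THEN tendsto_cong[THEN iffD1, rotated]])
         (simp add: eventually_mono)
  qed
  show "\<forall>\<^sub>F t in at_top. AE x in lborel. norm (indicator {c..t} x * \<psi> x) \<le> \<bar>\<psi> x\<bar>"
    by (intro always_eventually allI AE_I2) (auto simp: indicator_def)
qed


lemma tail_bot:
  fixes \<psi> :: "real \<Rightarrow> real"
  assumes int: "integrable lborel \<psi>"
  shows "((\<lambda>t. \<integral>x. indicator {-t..c} x * \<psi> x \<partial>lborel) \<longlongrightarrow> (\<integral>x. indicator {..c} x * \<psi> x \<partial>lborel)) at_top"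
proof (rule integral_dominated_convergence_at_top[where w="\<lambda>x. \<bar>\<psi> x\<bar>"])
  have m: "\<psi> \<in> borel_measurable lborel" using int by auto
  show "(\<lambda>x. indicator {..c} x * \<psi> x) \<in> borel_measurable lborel" using m by measurable
  show "(\<lambda>x. indicator {-t..c} x * \<psi> x) \<in> borel_measurable lborel" for t using m by measurable
  show "integrable lborel (\<lambda>x. \<bar>\<psi> x\<bar>)" using int by simp
  show "AE x in lborel. ((\<lambda>t. indicator {-t..c} x * \<psi> x) \<longlongrightarrow> indicator {..c} x * \<psi> x) at_top"
  proof (intro AE_I2)
    fix x
    have "eventually (\<lambda>t. indicator {-t..c} x * \<psi> x = indicator {..c} x * \<psi> x) at_top"
      using eventually_ge_at_top[of "-x"] by eventually_elim (auto simp: indicator_def)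
    thus "((\<lambda>t. indicator {-t..c} x * \<psi> x) \<longlongrightarrow> indicator {..c} x * \<psi> x) at_top"
      by (rule tendsto_eventually[THEN tendsto_cong[THEN iffD1, rotated]])
         (simp add: eventually_mono)
  qed
  show "\<forall>\<^sub>F t in at_top. AE x in lborel. norm (indicator {-t..c} x * \<psi> x) \<le> \<bar>\<psi> x\<bar>"
    by (intro always_eventually allI AE_I2) (auto simp: indicator_def)
qed

lemma tail_full:
  fixes \<psi> :: "real \<Rightarrow> real"
  assumes int: "integrable lborel \<psi>"
  shows "((\<lambda>t. \<integral>x. indicator {-t..t} x * \<psi> x \<partial>lborel) \<longlongrightarrow> (\<integral>x. \<psi> x \<partial>lborel)) at_top"
proof (rule integral_dominated_convergence_at_top[where w="\<lambda>x. \<bar>\<psi> x\<bar>"])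
  have m: "\<psi> \<in> borel_measurable lborel" using int by auto
  show "\<psi> \<in> borel_measurable lborel" using m .
  show "(\<lambda>x. indicator {-t..t} x * \<psi> x) \<in> borel_measurable lborel" for t using m by measurable
  show "integrable lborel (\<lambda>x. \<bar>\<psi> x\<bar>)" using int by simp
  show "AE x in lborel. ((\<lambda>t. indicator {-t..t} x * \<psi> x) \<longlongrightarrow> \<psi> x) at_top"
  proof (intro AE_I2)
    fix x
    have "eventually (\<lambda>t. indicator {-t..t} x * \<psi> x = \<psi> x) at_top"
      using eventually_ge_at_top[of "\<bar>x\<bar>"] by eventually_elim (auto simp: indicator_def)
    thus "((\<lambda>t. indicator {-t..t} x * \<psi> x) \<longlongrightarrow> \<psi> x) at_top"
      by (rule tendsto_eventually[THEN tendsto_cong[THEN iffD1, rotated]])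
         (simp add: eventually_mono)
  qed
  show "\<forall>\<^sub>F t in at_top. AE x in lborel. norm (indicator {-t..t} x * \<psi> x) \<le> \<bar>\<psi> x\<bar>"
    by (intro always_eventually allI AE_I2) (auto simp: indicator_def)
qed


lemma k_moments:
  fixes f k :: "real \<Rightarrow> real"
  assumes km: "k \<in> borel_measurable borel" and fm: "f \<in> borel_measurable borel"
    and ik: "integrable lborel k" and ixk: "integrable lborel (\<lambda>x. x * k x)"
    and iff: "integrable lborel f" and ixf: "integrable lborel (\<lambda>x. x * f x)"
    and f1: "(\<integral>x. f x \<partial>lborel) = 1"
    and kint: "\<And>c d. c \<le> d \<Longrightarrow> (\<integral>x. indicator {c..d} x * k x \<partial>lborel) = f d - f c"
  shows "(\<integral>x. k x \<partial>lborel) = 0" "(\<integral>x. x * k x \<partial>lborel) = -1"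
proof -
  have ikI: "integrable lborel (\<lambda>x. indicator A x * k x)" if "A \<in> sets borel" for A
    using integrable_mult_indicator[OF _ ik, of A] that by simp
  have ifI: "integrable lborel (\<lambda>x. indicator A x * f x)" if "A \<in> sets borel" for A
    using integrable_mult_indicator[OF _ iff, of A] that by simp
  have "((\<lambda>b. f 0 + (\<integral>x. indicator {0..b} x * k x \<partial>lborel)) \<longlongrightarrow> f 0 + (\<integral>x. indicator {0..} x * k x \<partial>lborel)) at_top"
    by (intro tendsto_add tendsto_const tail_top ik)
  moreover have "eventually (\<lambda>b. f 0 + (\<integral>x. indicator {0..b} x * k x \<partial>lborel) = f b) at_top"
    using eventually_ge_at_top[of "0::real"] by eventually_elim (simp add: kint)
  ultimately have fT: "(f \<longlongrightarrow> f 0 + (\<integral>x. indicator {0..} x * k x \<partial>lborel)) at_top"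
    by (rule Lim_transform_eventually)
  hence fT0: "(f \<longlongrightarrow> 0) at_top" using lim_zero[OF iff fT] by simp
  have "((\<lambda>t. f 0 - (\<integral>x. indicator {-t..0} x * k x \<partial>lborel)) \<longlongrightarrow> f 0 - (\<integral>x. indicator {..0} x * k x \<partial>lborel)) at_top"
    by (intro tendsto_diff tendsto_const tail_bot ik)
  moreover have "eventually (\<lambda>t. f 0 - (\<integral>x. indicator {-t..0} x * k x \<partial>lborel) = f (-t)) at_top"
    using eventually_ge_at_top[of "0::real"] by eventually_elim (simp add: kint)
  ultimately have fB: "((\<lambda>t. f (-t)) \<longlongrightarrow> f 0 - (\<integral>x. indicator {..0} x * k x \<partial>lborel)) at_top"
    by (rule Lim_transform_eventually)
  hence "(f \<longlongrightarrow> f 0 - (\<integral>x. indicator {..0} x * k x \<partial>lborel)) at_bot"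
    by (simp add: filterlim_at_bot_mirror)
  hence fB0: "((\<lambda>t. f (-t)) \<longlongrightarrow> 0) at_top" using lim_zero_bot[OF iff] fB by metis
  have "((\<lambda>t. \<integral>x. indicator {-t..t} x * k x \<partial>lborel) \<longlongrightarrow> (\<integral>x. k x \<partial>lborel)) at_top"
    by (rule tail_full[OF ik])
  moreover have "((\<lambda>t. \<integral>x. indicator {-t..t} x * k x \<partial>lborel) \<longlongrightarrow> 0 - 0) at_top"
  proof (rule Lim_transform_eventually)
    show "((\<lambda>t. f t - f (-t)) \<longlongrightarrow> 0 - 0) at_top" by (intro tendsto_diff fT0 fB0)
    show "eventually (\<lambda>t. f t - f (-t) = (\<integral>x. indicator {-t..t} x * k x \<partial>lborel)) at_top"
      using eventually_ge_at_top[of "0::real"] by eventually_elim (simp add: kint)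
  qed
  ultimately have "(\<integral>x. k x \<partial>lborel) = 0 - 0" by (rule tendsto_unique[OF trivial_limit_at_top_linorder])
  thus "(\<integral>x. k x \<partial>lborel) = 0" by simp
  have ibp': "(\<integral>x. indicator {a..b} x * (x * k x) \<partial>lborel) = b * f b - a * f a - (\<integral>x. indicator {a..b} x * f x \<partial>lborel)"
    if "a \<le> b" for a b
    by (rule ibp[OF km fm _ kint ifI that]) (auto intro: ikI)
  have "((\<lambda>b. (\<integral>x. indicator {0..b} x * (x * k x) \<partial>lborel) + (\<integral>x. indicator {0..b} x * f x \<partial>lborel))
      \<longlongrightarrow> (\<integral>x. indicator {0..} x * (x * k x) \<partial>lborel) + (\<integral>x. indicator {0..} x * f x \<partial>lborel)) at_top"
    by (intro tendsto_add tail_top ixk iff)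
  moreover have "eventually (\<lambda>b. (\<integral>x. indicator {0..b} x * (x * k x) \<partial>lborel) + (\<integral>x. indicator {0..b} x * f x \<partial>lborel) = b * f b) at_top"
    using eventually_ge_at_top[of "0::real"] by eventually_elim (simp add: ibp')
  ultimately have "((\<lambda>b. b * f b) \<longlongrightarrow> (\<integral>x. indicator {0..} x * (x * k x) \<partial>lborel) + (\<integral>x. indicator {0..} x * f x \<partial>lborel)) at_top"
    by (rule Lim_transform_eventually)
  hence gT0: "((\<lambda>b. b * f b) \<longlongrightarrow> 0) at_top" using lim_zero[OF ixf] by metis
  have "((\<lambda>t. - (\<integral>x. indicator {-t..0} x * (x * k x) \<partial>lborel) - (\<integral>x. indicator {-t..0} x * f x \<partial>lborel))
      \<longlongrightarrow> - (\<integral>x. indicator {..0} x * (x * k x) \<partial>lborel) - (\<integral>x. indicator {..0} x * f x \<partial>lborel)) at_top"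
    by (intro tendsto_diff tendsto_minus tail_bot ixk iff)
  moreover have "eventually (\<lambda>t. - (\<integral>x. indicator {-t..0} x * (x * k x) \<partial>lborel) - (\<integral>x. indicator {-t..0} x * f x \<partial>lborel) = (-t) * f (-t)) at_top"
    using eventually_ge_at_top[of "0::real"] by eventually_elim (simp add: ibp')
  ultimately have gB: "((\<lambda>t. (-t) * f (-t)) \<longlongrightarrow> - (\<integral>x. indicator {..0} x * (x * k x) \<partial>lborel) - (\<integral>x. indicator {..0} x * f x \<partial>lborel)) at_top"
    by (rule Lim_transform_eventually)
  hence "((\<lambda>b. b * f b) \<longlongrightarrow> - (\<integral>x. indicator {..0} x * (x * k x) \<partial>lborel) - (\<integral>x. indicator {..0} x * f x \<partial>lborel)) at_bot"
    by (simp add: filterlim_at_bot_mirror)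
  hence gB0: "((\<lambda>t. (-t) * f (-t)) \<longlongrightarrow> 0) at_top" using lim_zero_bot[OF ixf] gB by metis
  have "((\<lambda>t. \<integral>x. indicator {-t..t} x * (x * k x) \<partial>lborel) \<longlongrightarrow> (\<integral>x. x * k x \<partial>lborel)) at_top"
    by (rule tail_full[OF ixk])
  moreover have "((\<lambda>t. \<integral>x. indicator {-t..t} x * (x * k x) \<partial>lborel) \<longlongrightarrow> 0 - 0 - 1) at_top"
  proof (rule Lim_transform_eventually)
    show "((\<lambda>t. t * f t - (-t) * f (-t) - (\<integral>x. indicator {-t..t} x * f x \<partial>lborel)) \<longlongrightarrow> 0 - 0 - 1) at_top"
      by (intro tendsto_diff gT0 gB0) (use tail_full[OF iff] f1 in simp)
    show "eventually (\<lambda>t. t * f t - (-t) * f (-t) - (\<integral>x. indicator {-t..t} x * f x \<partial>lborel) = (\<integral>x. indicator {-t..t} x * (x * k x) \<partial>lborel)) at_top"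
      using eventually_ge_at_top[of "0::real"] by eventually_elim (simp add: ibp')
  qed
  ultimately have "(\<integral>x. x * k x \<partial>lborel) = 0 - 0 - 1" by (rule tendsto_unique[OF trivial_limit_at_top_linorder])
  thus "(\<integral>x. x * k x \<partial>lborel) = -1" by simp
qed


lemma abs_mult_le_sq: "\<bar>a * b\<bar> \<le> a\<^sup>2 + b\<^sup>2" for a b :: real
proof -
  have "0 \<le> (\<bar>a\<bar> - \<bar>b\<bar>)\<^sup>2" by simp
  hence "2 * (\<bar>a\<bar> * \<bar>b\<bar>) \<le> \<bar>a\<bar>\<^sup>2 + \<bar>b\<bar>\<^sup>2" by (simp add: power2_eq_square algebra_simps)
  moreover have "0 \<le> \<bar>a\<bar> * \<bar>b\<bar>" by simp
  ultimately show ?thesis unfolding abs_mult power2_abs by linarith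
qed

lemma L2_mult: assumes a: "L2 M \<phi>" "L2 M \<psi>" shows "integrable M (\<lambda>x. \<phi> x * \<psi> x)"
proof (rule Bochner_Integration.integrable_bound)
  show "integrable M (\<lambda>x. (\<phi> x)\<^sup>2 + (\<psi> x)\<^sup>2)"
    using a unfolding L2_def by (intro Bochner_Integration.integrable_add) auto
  show "(\<lambda>x. \<phi> x * \<psi> x) \<in> borel_measurable M"
    using a unfolding L2_def by (intro borel_measurable_times) auto
  show "AE x in M. norm (\<phi> x * \<psi> x) \<le> norm ((\<phi> x)\<^sup>2 + (\<psi> x)\<^sup>2)"
  proof (rule AE_I2)
    fix x
    have "\<bar>\<phi> x * \<psi> x\<bar> \<le> (\<phi> x)\<^sup>2 + (\<psi> x)\<^sup>2" by (rule abs_mult_le_sq)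
    moreover have "0 \<le> (\<phi> x)\<^sup>2 + (\<psi> x)\<^sup>2" by simp
    ultimately show "norm (\<phi> x * \<psi> x) \<le> norm ((\<phi> x)\<^sup>2 + (\<psi> x)\<^sup>2)" by simp
  qed
qed

lemma L2_int: "finite_measure M \<Longrightarrow> L2 M \<phi> \<Longrightarrow> integrable M \<phi>"
proof -
  assume fm: "finite_measure M" and l: "L2 M \<phi>"
  interpret finite_measure M by fact
  have "L2 M (\<lambda>x. 1)" unfolding L2_def by simp
  from L2_mult[OF l this] show ?thesis by simp
qed

lemma L2_add: assumes a: "L2 M \<phi>" "L2 M \<psi>" shows "L2 M (\<lambda>x. \<phi> x + \<psi> x)"
proof -
  have i1: "integrable M (\<lambda>x. (\<phi> x)\<^sup>2)" "integrable M (\<lambda>x. (\<psi> x)\<^sup>2)"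
    and m: "\<phi> \<in> borel_measurable M" "\<psi> \<in> borel_measurable M" using a unfolding L2_def by auto
  have i2: "integrable M (\<lambda>x. \<phi> x * \<psi> x)" by (rule L2_mult[OF a])
  have "integrable M (\<lambda>x. (\<phi> x)\<^sup>2 + (\<psi> x)\<^sup>2 + 2 * (\<phi> x * \<psi> x))"
    by (intro Bochner_Integration.integrable_add i1 i2 integrable_mult_right)
  moreover have "(\<lambda>x. (\<phi> x)\<^sup>2 + (\<psi> x)\<^sup>2 + 2 * (\<phi> x * \<psi> x)) = (\<lambda>x. (\<phi> x + \<psi> x)\<^sup>2)"
    by (simp add: power2_eq_square algebra_simps fun_eq_iff)
  ultimately have "integrable M (\<lambda>x. (\<phi> x + \<psi> x)\<^sup>2)" by (simp only:)
  moreover have "(\<lambda>x. \<phi> x + \<psi> x) \<in> borel_measurable M" using m by (rule borel_measurable_add)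
  ultimately show ?thesis unfolding L2_def by blast
qed

lemma L2_cmult: "L2 M \<phi> \<Longrightarrow> L2 M (\<lambda>x. c * \<phi> x)"
  unfolding L2_def by (auto simp: power_mult_distrib)

lemma L2_uminus: "L2 M \<phi> \<Longrightarrow> L2 M (\<lambda>x. - \<phi> x)"
  unfolding L2_def by auto

lemma L2_diff: assumes "L2 M \<phi>" "L2 M \<psi>" shows "L2 M (\<lambda>x. \<phi> x - \<psi> x)"
proof -
  have "L2 M (\<lambda>x. \<phi> x + - \<psi> x)" by (rule L2_add[OF assms(1) L2_uminus[OF assms(2)]])
  thus ?thesis unfolding diff_conv_add_uminus .
qed

lemma L2_const: assumes "finite_measure M" shows "L2 M (\<lambda>x. c)"
proof -
  interpret finite_measure M by fact
  show ?thesis unfolding L2_def by (intro conjI borel_measurable_const integrable_const)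
qed


lemma bool_lborel_int:
  fixes b :: "real \<Rightarrow> real" and e :: bool
  assumes ib: "integrable lborel b"
  shows "integrable (count_space UNIV \<Otimes>\<^sub>M lborel) (\<lambda>p. (if fst p = e then 1 else 0) * b (snd p))"
    "(\<integral>p. (if fst p = e then 1 else 0) * b (snd p) \<partial>(count_space UNIV \<Otimes>\<^sub>M lborel)) = (\<integral>z. b z \<partial>lborel)"
proof -
  have s1: "sigma_finite_measure (count_space (UNIV :: bool set))"
    by (rule sigma_finite_measure_count_space_finite) simp
  have s2: "sigma_finite_measure (lborel :: real measure)" by (rule lborel.sigma_finite_measure_axioms)
  have i1: "integrable (count_space (UNIV :: bool set)) (\<lambda>d. if d = e then 1 else 0 :: real)"
    by (rule integrable_count_space) simp
  show "integrable (count_space UNIV \<Otimes>\<^sub>M lborel) (\<lambda>p. (if fst p = e then 1 else 0) * b (snd p))"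
    by (rule prod_int(1)[OF s1 s2 i1 ib])
  have "(\<integral>d. (if d = e then 1 else 0 :: real) \<partial>count_space UNIV) = 1"
    by (subst lebesgue_integral_count_space_finite) (auto simp: UNIV_bool)
  thus "(\<integral>p. (if fst p = e then 1 else 0) * b (snd p) \<partial>(count_space UNIV \<Otimes>\<^sub>M lborel)) = (\<integral>z. b z \<partial>lborel)"
    using prod_int(2)[OF s1 s2 i1 ib] by simp
qed

lemma err_dist_int:
  fixes f B :: "real \<Rightarrow> real"
  assumes fm: "f \<in> borel_measurable borel" and fn: "\<And>z. 0 \<le> f z"
    and Bm: "B \<in> borel_measurable borel"
  shows "integrable (err_dist f) B \<longleftrightarrow> integrable lborel (\<lambda>z. f z * B z)"
    "(\<integral>z. B z \<partial>err_dist f) = (\<integral>z. f z * B z \<partial>lborel)"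
  unfolding err_dist_def
  using integrable_density[of B lborel f] integral_density[of B lborel f] fm fn Bm by auto


lemma PL:
  fixes G :: "(real^'m) measure" and \<pi> :: "real^'m \<Rightarrow> real" and f B :: "real \<Rightarrow> real"
    and A :: "real^'m \<Rightarrow> bool \<Rightarrow> real"
  assumes sG: "sigma_finite_measure G"
    and \<pi>m: "\<pi> \<in> borel_measurable G"
    and fm: "f \<in> borel_measurable borel" and fn: "\<And>z. 0 \<le> f z"
    and Am1: "(\<lambda>x. A x True) \<in> borel_measurable G" and Am2: "(\<lambda>x. A x False) \<in> borel_measurable G"
    and Bm: "B \<in> borel_measurable borel"
    and iA1: "integrable G (\<lambda>x. max 0 (\<pi> x) * A x True)"
    and iA2: "integrable G (\<lambda>x. max 0 (1 - \<pi> x) * A x False)"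
    and iB: "integrable (err_dist f) B"
  shows "integrable (joint_law G \<pi> f) (\<lambda>\<omega>. A (fst \<omega>) (fst (snd \<omega>)) * B (snd (snd \<omega>)))"
    "(\<integral>\<omega>. A (fst \<omega>) (fst (snd \<omega>)) * B (snd (snd \<omega>)) \<partial>joint_law G \<pi> f) =
       ((\<integral>x. max 0 (\<pi> x) * A x True \<partial>G) + (\<integral>x. max 0 (1 - \<pi> x) * A x False \<partial>G)) * (\<integral>z. B z \<partial>err_dist f)"
proof -
  define base where "base = G \<Otimes>\<^sub>M (count_space (UNIV :: bool set) \<Otimes>\<^sub>M (lborel :: real measure))"
  define \<rho> where "\<rho> \<omega> = (if fst (snd \<omega>) then max 0 (\<pi> (fst \<omega>)) else max 0 (1 - \<pi> (fst \<omega>))) * f (snd (snd \<omega>))"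
    for \<omega> :: "(real^'m) \<times> bool \<times> real"
  have jl: "joint_law G \<pi> f = density base (\<lambda>\<omega>. ennreal (\<rho> \<omega>))"
  proof -
    have "(\<lambda>(x, d, z). ennreal ((if d then \<pi> x else 1 - \<pi> x) * f z)) = (\<lambda>\<omega>. ennreal (\<rho> \<omega>))"
    proof
      fix \<omega> :: "(real^'m) \<times> bool \<times> real"
      obtain x d z where w: "\<omega> = (x, d, z)" by (cases \<omega>) auto
      have "ennreal (c * f z) = ennreal (max 0 c * f z)" for c
      proof (cases "0 \<le> c")
        case False
        hence "c * f z \<le> 0" using fn[of z] by (simp add: mult_nonpos_nonneg)
        thus ?thesis using False by (simp add: ennreal_neg)
      qed simp
      thus "(case \<omega> of (x, d, z) \<Rightarrow> ennreal ((if d then \<pi> x else 1 - \<pi> x) * f z)) = ennreal (\<rho> \<omega>)"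
        by (simp add: w \<rho>_def)
    qed
    thus ?thesis unfolding joint_law_def base_def by simp
  qed
  have s1: "sigma_finite_measure (count_space (UNIV :: bool set))"
    by (rule sigma_finite_measure_count_space_finite) simp
  have sCL: "sigma_finite_measure (count_space (UNIV :: bool set) \<Otimes>\<^sub>M (lborel :: real measure))"
    by (rule sigma_finite_pair_measure[OF s1 lborel.sigma_finite_measure_axioms])
  have \<rho>m: "\<rho> \<in> borel_measurable base" unfolding \<rho>_def base_def using \<pi>m fm by measurable
  have \<rho>n: "AE \<omega> in base. 0 \<le> \<rho> \<omega>" by (intro AE_I2) (simp add: \<rho>_def fn)
  have \<phi>m: "(\<lambda>\<omega>. A (fst \<omega>) (fst (snd \<omega>)) * B (snd (snd \<omega>))) \<in> borel_measurable base"
  proof -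
    have e1: "(\<lambda>\<omega>. A (fst \<omega>) (fst (snd \<omega>))) = (\<lambda>\<omega>. if fst (snd \<omega>) then A (fst \<omega>) True else A (fst \<omega>) False)"
      by (auto simp: fun_eq_iff)
    have m1: "(\<lambda>\<omega>. if fst (snd \<omega>) then A (fst \<omega>) True else A (fst \<omega>) False) \<in> borel_measurable base"
    proof (rule measurable_If)
      show "(\<lambda>\<omega>. A (fst \<omega>) True) \<in> borel_measurable base"
        unfolding base_def by (rule measurable_compose[OF measurable_fst Am1])
      show "(\<lambda>\<omega>. A (fst \<omega>) False) \<in> borel_measurable base"
        unfolding base_def by (rule measurable_compose[OF measurable_fst Am2])
      have "(\<lambda>\<omega>. fst (snd \<omega>)) \<in> base \<rightarrow>\<^sub>M count_space UNIV"
        unfolding base_def by (rule measurable_compose[OF measurable_snd measurable_fst])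
      thus "{\<omega> \<in> space base. fst (snd \<omega>)} \<in> sets base"
        by (simp add: pred_def[symmetric])
    qed
    have m2: "(\<lambda>\<omega>. B (snd (snd \<omega>))) \<in> borel_measurable base"
    proof -
      have Bm': "B \<in> borel_measurable lborel" using Bm by simp
      show ?thesis unfolding base_def
        by (rule measurable_compose[OF measurable_compose[OF measurable_snd measurable_snd] Bm'])
    qed
    show ?thesis using borel_measurable_times[OF m1[folded e1] m2] .
  qed
  have ifB: "integrable lborel (\<lambda>z. f z * B z)" using err_dist_int(1)[OF fm fn Bm] iB by simp
  define b1 where "b1 = (\<lambda>p :: bool \<times> real. (if fst p = True then 1 else 0) * (f (snd p) * B (snd p)))"
  define b2 where "b2 = (\<lambda>p :: bool \<times> real. (if fst p = False then 1 else 0) * (f (snd p) * B (snd p)))"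
  have ib1: "integrable (count_space UNIV \<Otimes>\<^sub>M lborel) b1" unfolding b1_def by (rule bool_lborel_int(1)[OF ifB])
  have ib2: "integrable (count_space UNIV \<Otimes>\<^sub>M lborel) b2" unfolding b2_def by (rule bool_lborel_int(1)[OF ifB])
  have Ib1: "(\<integral>p. b1 p \<partial>(count_space UNIV \<Otimes>\<^sub>M lborel)) = (\<integral>z. f z * B z \<partial>lborel)"
    unfolding b1_def by (rule bool_lborel_int(2)[OF ifB])
  have Ib2: "(\<integral>p. b2 p \<partial>(count_space UNIV \<Otimes>\<^sub>M lborel)) = (\<integral>z. f z * B z \<partial>lborel)"
    unfolding b2_def by (rule bool_lborel_int(2)[OF ifB])
  define a1 where "a1 = (\<lambda>x. max 0 (\<pi> x) * A x True)"
  define a2 where "a2 = (\<lambda>x. max 0 (1 - \<pi> x) * A x False)"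
  have T1: "integrable base (\<lambda>z. a1 (fst z) * b1 (snd z))"
    unfolding base_def a1_def by (rule prod_int(1)[OF sG sCL iA1 ib1])
  have T2: "integrable base (\<lambda>z. a2 (fst z) * b2 (snd z))"
    unfolding base_def a2_def by (rule prod_int(1)[OF sG sCL iA2 ib2])
  have IT1: "(\<integral>z. a1 (fst z) * b1 (snd z) \<partial>base) = (\<integral>x. a1 x \<partial>G) * (\<integral>z. f z * B z \<partial>lborel)"
    unfolding base_def using prod_int(2)[OF sG sCL iA1 ib1] Ib1 by (simp add: a1_def)
  have IT2: "(\<integral>z. a2 (fst z) * b2 (snd z) \<partial>base) = (\<integral>x. a2 x \<partial>G) * (\<integral>z. f z * B z \<partial>lborel)"
    unfolding base_def using prod_int(2)[OF sG sCL iA2 ib2] Ib2 by (simp add: a2_def)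
  have eq: "\<rho> \<omega> *\<^sub>R (A (fst \<omega>) (fst (snd \<omega>)) * B (snd (snd \<omega>))) = a1 (fst \<omega>) * b1 (snd \<omega>) + a2 (fst \<omega>) * b2 (snd \<omega>)" for \<omega>
    by (cases "fst (snd \<omega>)") (simp_all add: \<rho>_def a1_def a2_def b1_def b2_def)
  have intbase: "integrable base (\<lambda>\<omega>. \<rho> \<omega> *\<^sub>R (A (fst \<omega>) (fst (snd \<omega>)) * B (snd (snd \<omega>))))"
    unfolding eq by (rule Bochner_Integration.integrable_add[OF T1 T2])
  show "integrable (joint_law G \<pi> f) (\<lambda>\<omega>. A (fst \<omega>) (fst (snd \<omega>)) * B (snd (snd \<omega>)))"
    unfolding jl using integrable_density[OF \<phi>m \<rho>m \<rho>n] intbase by simp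
  have "(\<integral>\<omega>. A (fst \<omega>) (fst (snd \<omega>)) * B (snd (snd \<omega>)) \<partial>joint_law G \<pi> f)
      = (\<integral>\<omega>. \<rho> \<omega> *\<^sub>R (A (fst \<omega>) (fst (snd \<omega>)) * B (snd (snd \<omega>))) \<partial>base)"
    unfolding jl by (rule integral_density[OF \<phi>m \<rho>m \<rho>n])
  also have "\<dots> = (\<integral>z. a1 (fst z) * b1 (snd z) \<partial>base) + (\<integral>z. a2 (fst z) * b2 (snd z) \<partial>base)"
    unfolding eq by (rule Bochner_Integration.integral_add[OF T1 T2])
  also have "\<dots> = ((\<integral>x. a1 x \<partial>G) + (\<integral>x. a2 x \<partial>G)) * (\<integral>z. f z * B z \<partial>lborel)"
    by (simp add: IT1 IT2 algebra_simps)
  finally show "(\<integral>\<omega>. A (fst \<omega>) (fst (snd \<omega>)) * B (snd (snd \<omega>)) \<partial>joint_law G \<pi> f) =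
       ((\<integral>x. max 0 (\<pi> x) * A x True \<partial>G) + (\<integral>x. max 0 (1 - \<pi> x) * A x False \<partial>G)) * (\<integral>z. B z \<partial>err_dist f)"
    using err_dist_int(2)[OF fm fn Bm] by (simp add: a1_def a2_def)
qed


lemma err_dist_sets: "sets (err_dist f) = sets borel"
  unfolding err_dist_def by simp

lemma err_dist_meas: "(g \<in> borel_measurable (err_dist f)) \<longleftrightarrow> (g \<in> borel_measurable borel)"
  by (simp add: measurable_cong_sets[OF err_dist_sets refl])

lemma err_dist_prob:
  assumes fm: "f \<in> borel_measurable borel" and fn: "\<And>z. 0 \<le> f z"
    and fi: "integrable lborel f" and f1: "(\<integral>z. f z \<partial>lborel) = 1"
  shows "prob_space (err_dist f)"
proof (rule prob_spaceI)
  have "emeasure (err_dist f) (space (err_dist f)) = (\<integral>\<^sup>+ z. ennreal (f z) \<partial>lborel)"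
    unfolding err_dist_def using fm by (simp add: emeasure_density)
  also have "\<dots> = ennreal (\<integral>z. f z \<partial>lborel)"
    by (rule nn_integral_eq_integral[OF fi]) (simp add: fn)
  finally show "emeasure (err_dist f) (space (err_dist f)) = 1" using f1 by simp
qed

lemma score_moments:
  fixes f f' :: "real \<Rightarrow> real"
  assumes f_nonneg: "\<And>z. 0 \<le> f z" and f_meas: "f \<in> borel_measurable borel"
    and f_int: "integrable lborel f" and f_int1: "(\<integral>z. f z \<partial>lborel) = 1"
    and f_mean_int: "integrable (err_dist f) (\<lambda>z. z)"
    and f_var: "integrable (err_dist f) (\<lambda>z. z^2)"
    and f_abs_cont: "\<And>a b. a \<le> b \<Longrightarrow>
          f' absolutely_integrable_on {a..b} \<and> integral {a..b} f' = f b - f a"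
    and fisher: "L2 (err_dist f) (score f f')"
  shows "(\<integral>z. score f f' z \<partial>err_dist f) = 0" "(\<integral>z. z * score f f' z \<partial>err_dist f) = 1"
proof -
  let ?F = "err_dist f" and ?l = "score f f'"
  interpret F: prob_space ?F by (rule err_dist_prob[OF f_meas f_nonneg f_int f_int1])
  have fin: "finite_measure ?F" by (rule F.finite_measure_axioms)
  have lm: "?l \<in> borel_measurable borel" using fisher unfolding L2_def err_dist_meas by simp
  have zL2: "L2 ?F (\<lambda>z. z)" unfolding L2_def err_dist_meas using f_var by simp
  have il: "integrable ?F ?l" by (rule L2_int[OF fin fisher])
  have izl: "integrable ?F (\<lambda>z. z * ?l z)" by (rule L2_mult[OF zL2 fisher])
  define k where "k x = - (?l x * f x)" for x
  have km: "k \<in> borel_measurable borel" unfolding k_def using lm f_meas by measurable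
  have kk: "k = (\<lambda>x. if f x = 0 then 0 else f' x)"
    by (auto simp: k_def score_def fun_eq_iff)
  have cont: "continuous_on UNIV f" by (rule ac_cont[OF f_abs_cont])
  have ik: "integrable lborel k"
  proof -
    have "integrable lborel (\<lambda>z. f z * ?l z)" using err_dist_int(1)[OF f_meas f_nonneg lm] il by simp
    hence "integrable lborel (\<lambda>z. - (f z * ?l z))" by (rule integrable_minus)
    thus ?thesis unfolding k_def by (simp add: mult.commute)
  qed
  have ixk: "integrable lborel (\<lambda>x. x * k x)"
  proof -
    have zlm: "(\<lambda>z. z * ?l z) \<in> borel_measurable borel" using lm by measurable
    have "integrable lborel (\<lambda>z. f z * (z * ?l z))" using err_dist_int(1)[OF f_meas f_nonneg zlm] izl by simp
    hence "integrable lborel (\<lambda>z. - (f z * (z * ?l z)))" by (rule integrable_minus)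
    thus ?thesis unfolding k_def by (simp add: mult_ac)
  qed
  have ixf: "integrable lborel (\<lambda>x. x * f x)"
  proof -
    have "integrable lborel (\<lambda>z. f z * z)" using err_dist_int(1)[OF f_meas f_nonneg measurable_ident_sets[OF refl]] f_mean_int by simp
    thus ?thesis by (simp add: mult.commute)
  qed
  have kint: "(\<integral>x. indicator {c..d} x * k x \<partial>lborel) = f d - f c" if cd: "c \<le> d" for c d
  proof -
    have "(LINT x:{c..d}|lebesgue. k x) = f d - f c" unfolding kk by (rule k_int(2)[OF f_abs_cont cont cd])
    moreover have "(LINT x:{c..d}|lebesgue. k x) = (\<integral>x. indicator {c..d} x * k x \<partial>lborel)"
      unfolding set_lebesgue_integral_def
      by (subst integral_completion) (use km in \<open>auto\<close>)
    ultimately show ?thesis by simp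
  qed
  have mom: "(\<integral>x. k x \<partial>lborel) = 0" "(\<integral>x. x * k x \<partial>lborel) = -1"
    by (rule k_moments[OF km f_meas ik ixk f_int ixf f_int1 kint], assumption)+
  have "(\<integral>z. ?l z \<partial>?F) = (\<integral>z. f z * ?l z \<partial>lborel)" by (rule err_dist_int(2)[OF f_meas f_nonneg lm])
  also have "\<dots> = (\<integral>z. - k z \<partial>lborel)" by (simp add: k_def mult.commute)
  also have "\<dots> = 0" using mom by simp
  finally show "(\<integral>z. ?l z \<partial>?F) = 0" .
  have zlm: "(\<lambda>z. z * ?l z) \<in> borel_measurable borel" using lm by measurable
  have "(\<integral>z. z * ?l z \<partial>?F) = (\<integral>z. f z * (z * ?l z) \<partial>lborel)" by (rule err_dist_int(2)[OF f_meas f_nonneg zlm])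
  also have "\<dots> = (\<integral>z. - (z * k z) \<partial>lborel)" by (simp add: k_def mult_ac)
  also have "\<dots> = 1" using mom by simp
  finally show "(\<integral>z. z * ?l z \<partial>?F) = 1" .
qed


lemma lin3:
  fixes f g k :: "'a \<Rightarrow> real"
  assumes "integrable M f" "integrable M g" "integrable M k"
  shows "(\<integral>x. a * f x + b * g x + c * k x \<partial>M) = a * integral\<^sup>L M f + b * integral\<^sup>L M g + c * integral\<^sup>L M k"
proof -
  have "(\<integral>x. a * f x + b * g x + c * k x \<partial>M) = (\<integral>x. a * f x + b * g x \<partial>M) + (\<integral>x. c * k x \<partial>M)"
    using assms by (intro Bochner_Integration.integral_add Bochner_Integration.integrable_add integrable_mult_right)
  also have "(\<integral>x. a * f x + b * g x \<partial>M) = (\<integral>x. a * f x \<partial>M) + (\<integral>x. b * g x \<partial>M)"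
    using assms by (intro Bochner_Integration.integral_add integrable_mult_right)
  finally show ?thesis by simp
qed

lemma lin2:
  fixes f g :: "'a \<Rightarrow> real"
  assumes "integrable M f" "integrable M g"
  shows "(\<integral>x. a * f x + b * g x \<partial>M) = a * integral\<^sup>L M f + b * integral\<^sup>L M g"
proof -
  have "(\<integral>x. a * f x + b * g x \<partial>M) = (\<integral>x. a * f x \<partial>M) + (\<integral>x. b * g x \<partial>M)"
    using assms by (intro Bochner_Integration.integral_add integrable_mult_right)
  thus ?thesis by simp
qed

lemma integrable_AE_eq:
  assumes "integrable M f" "g \<in> borel_measurable M" "AE x in M. f x = g x"
  shows "integrable M (g :: 'a \<Rightarrow> real)"
  using integrable_cong_AE[of f M g] assms by auto

lemma var_pos:
  fixes f :: "real \<Rightarrow> real"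
  assumes fm: "f \<in> borel_measurable borel" and fn: "\<And>z. 0 \<le> f z"
    and fi: "integrable lborel f" and f1: "(\<integral>z. f z \<partial>lborel) = 1"
    and fv: "integrable (err_dist f) (\<lambda>z. z^2)"
  shows "0 < err_var f"
proof -
  have zm: "(\<lambda>z::real. z^2) \<in> borel_measurable borel" by measurable
  have ev: "err_var f = (\<integral>z. f z * z^2 \<partial>lborel)"
    unfolding err_var_def by (rule err_dist_int(2)[OF fm fn zm])
  have iv: "integrable lborel (\<lambda>z. f z * z^2)" using err_dist_int(1)[OF fm fn zm] fv by simp
  have nn: "AE z in lborel. 0 \<le> f z * z^2" by (intro AE_I2) (simp add: fn)
  have "0 \<le> err_var f" unfolding ev by (rule integral_nonneg_AE[OF nn])
  moreover have "err_var f \<noteq> 0"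
  proof
    assume "err_var f = 0"
    hence "AE z in lborel. f z * z^2 = 0" using integral_nonneg_eq_0_iff_AE[OF iv nn] ev by simp
    moreover have "AE z in lborel. (z::real) \<noteq> 0"
      using AE_not_in[OF countable_imp_null_set_lborel[of "{0::real}"]] by simp
    ultimately have aeF: "AE z in lborel. f z = 0" by eventually_elim simp
    have "(\<integral>z. f z \<partial>lborel) = 0"
      by (rule integral_eq_zero_AE[OF aeF])
    thus False using f1 by simp
  qed
  ultimately show ?thesis by simp
qed


lemma F_calcs:
  fixes f f' h :: "real \<Rightarrow> real" and Ed :: real
  assumes Fp: "prob_space (err_dist f)"
    and Ed: "0 < Ed"
    and sig: "0 < err_var f"
    and f_mean0: "(\<integral>z. z \<partial>err_dist f) = 0"
    and zL2: "L2 (err_dist f) (\<lambda>z. z)"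
    and lL2: "L2 (err_dist f) (score f f')"
    and hL2: "L2 (err_dist f) h"
    and m1: "(\<integral>z. score f f' z \<partial>err_dist f) = 0"
    and m2: "(\<integral>z. z * score f f' z \<partial>err_dist f) = 1"
  fixes h0 l0 sst B :: "real \<Rightarrow> real" and c T :: real
  assumes h0_def: "h0 = h0_of f h" and l0_def: "l0 = l0_of f f'"
    and c_def: "c = (\<integral>e. h0_of f h e * l0_of f f' e \<partial>err_dist f)"
    and T_def: "T = - err_var f / Ed * c"
    and sst_def: "sst = (\<lambda>z. (1 / Ed) * (h0 z + err_var f * c * l0 z))"
    and B_def: "B = (\<lambda>z. sst z + score f f' z * T)"
  shows "L2 (err_dist f) sst" "L2 (err_dist f) B"
    "(\<integral>z. sst z \<partial>err_dist f) = 0" "(\<integral>z. z * sst z \<partial>err_dist f) = 0"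
    "(\<integral>z. B z \<partial>err_dist f) = 0" "(\<integral>z. B z * score f f' z \<partial>err_dist f) = 0"
    "L2 (err_dist f) h0"
    "\<And>s. L2 (err_dist f) s \<Longrightarrow> (\<integral>z. z * s z \<partial>err_dist f) = 0 \<Longrightarrow> (\<integral>z. s z \<partial>err_dist f) = 0 \<Longrightarrow>
        Ed * (\<integral>z. B z * s z \<partial>err_dist f) = (\<integral>z. h0 z * s z \<partial>err_dist f)"
proof -
  let ?F = "err_dist f" and ?l = "score f f'"
  define \<sigma> where "\<sigma> = err_var f"
  interpret F: prob_space ?F by (rule Fp)
  have fin: "finite_measure ?F" by (rule F.finite_measure_axioms)
  have oneL2: "L2 ?F (\<lambda>z. 1::real)" by (rule L2_const[OF fin])
  have int: "integrable ?F \<phi>" if "L2 ?F \<phi>" for \<phi> by (rule L2_int[OF fin that])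
  define Eh where "Eh = (\<integral>z. h z \<partial>?F)"
  define Ezh where "Ezh = (\<integral>z. z * h z \<partial>?F)"
  define J where "J = (\<integral>z. ?l z * ?l z \<partial>?F)"
  have h0_eq: "h0 = (\<lambda>z. 1 * h z + (- Eh) * 1 + (- Ezh / \<sigma>) * z)"
    by (auto simp: h0_def h0_of_def Eh_def Ezh_def \<sigma>_def fun_eq_iff)
  have l0_eq: "l0 = (\<lambda>z. 1 * ?l z + (- 1 / \<sigma>) * z)"
    by (auto simp: l0_def l0_of_def \<sigma>_def fun_eq_iff)
  have c_eq: "c = (\<integral>z. h0 z * l0 z \<partial>?F)" by (simp add: c_def h0_def l0_def)
  have h0L2: "L2 ?F h0" unfolding h0_eq
    by (intro L2_add L2_cmult hL2 oneL2 zL2)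
  show "L2 ?F h0" by (rule h0L2)
  have l0L2: "L2 ?F l0" unfolding l0_eq by (intro L2_add L2_cmult lL2 zL2)
  have sst_eq: "sst = (\<lambda>z. (1 / Ed) * h0 z + (\<sigma> * c / Ed) * l0 z)"
    by (auto simp: sst_def \<sigma>_def fun_eq_iff field_simps add_divide_distrib)
  have sL2: "L2 ?F sst" unfolding sst_eq by (intro L2_add L2_cmult h0L2 l0L2)
  show "L2 ?F sst" by (rule sL2)
  have B_eq: "B = (\<lambda>z. 1 * sst z + T * ?l z)" by (auto simp: B_def fun_eq_iff)
  have BL2: "L2 ?F B" unfolding B_eq by (intro L2_add L2_cmult sL2 lL2)
  show "L2 ?F B" by (rule BL2)
  have sg0: "\<sigma> \<noteq> 0" using sig by (simp add: \<sigma>_def)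
  have ih: "integrable ?F h" by (rule int[OF hL2])
  have i1: "integrable ?F (\<lambda>z. 1::real)" by (rule int[OF oneL2])
  have iz: "integrable ?F (\<lambda>z. z)" by (rule int[OF zL2])
  have il: "integrable ?F ?l" by (rule int[OF lL2])
  have ih0: "integrable ?F h0" by (rule int[OF h0L2])
  have il0: "integrable ?F l0" by (rule int[OF l0L2])
  have izh: "integrable ?F (\<lambda>x. x * h x)" by (rule L2_mult[OF zL2 hL2])
  have izz: "integrable ?F (\<lambda>x. x * x)" by (rule L2_mult[OF zL2 zL2])
  have izl: "integrable ?F (\<lambda>x. x * ?l x)" by (rule L2_mult[OF zL2 lL2])
  have izh0: "integrable ?F (\<lambda>x. x * h0 x)" by (rule L2_mult[OF zL2 h0L2])
  have izl0: "integrable ?F (\<lambda>x. x * l0 x)" by (rule L2_mult[OF zL2 l0L2])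
  have ih0l0: "integrable ?F (\<lambda>x. h0 x * l0 x)" by (rule L2_mult[OF h0L2 l0L2])
  have ih0l: "integrable ?F (\<lambda>x. h0 x * ?l x)" by (rule L2_mult[OF h0L2 lL2])
  have il0l: "integrable ?F (\<lambda>x. l0 x * ?l x)" by (rule L2_mult[OF l0L2 lL2])
  have ill: "integrable ?F (\<lambda>x. ?l x * ?l x)" by (rule L2_mult[OF lL2 lL2])
  have E1: "(\<integral>z. 1 \<partial>?F) = (1::real)" by (simp add: F.prob_space)
  have Ezz: "(\<integral>z. z * z \<partial>?F) = \<sigma>" by (simp add: \<sigma>_def err_var_def power2_eq_square)
  have I1: "(\<integral>z. h0 z \<partial>?F) = 0"
  proof -
    have "(\<integral>z. h0 z \<partial>?F) = 1 * (\<integral>z. h z \<partial>?F) + (- Eh) * (\<integral>z. 1 \<partial>?F) + (- Ezh / \<sigma>) * (\<integral>z. z \<partial>?F)"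
      unfolding h0_eq by (rule lin3[OF ih i1 iz])
    thus ?thesis by (simp add: Eh_def E1 F.prob_space f_mean0)
  qed
  have I2: "(\<integral>z. z * h0 z \<partial>?F) = 0"
  proof -
    have "(\<integral>z. z * h0 z \<partial>?F) = (\<integral>z. 1 * (z * h z) + (- Eh) * z + (- Ezh / \<sigma>) * (z * z) \<partial>?F)"
      by (rule Bochner_Integration.integral_cong[OF refl]) (simp add: h0_eq algebra_simps)
    also have "\<dots> = 1 * (\<integral>z. z * h z \<partial>?F) + (- Eh) * (\<integral>z. z \<partial>?F) + (- Ezh / \<sigma>) * (\<integral>z. z * z \<partial>?F)"
      by (rule lin3[OF izh iz izz])
    finally show ?thesis using sg0 by (simp add: Ezh_def Ezz f_mean0)
  qed
  have I3: "(\<integral>z. l0 z \<partial>?F) = 0"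
  proof -
    have "(\<integral>z. l0 z \<partial>?F) = 1 * (\<integral>z. ?l z \<partial>?F) + (- 1 / \<sigma>) * (\<integral>z. z \<partial>?F)"
      unfolding l0_eq by (rule lin2[OF il iz])
    thus ?thesis by (simp add: m1 f_mean0)
  qed
  have I4: "(\<integral>z. z * l0 z \<partial>?F) = 0"
  proof -
    have "(\<integral>z. z * l0 z \<partial>?F) = (\<integral>z. 1 * (z * ?l z) + (- 1 / \<sigma>) * (z * z) \<partial>?F)"
      by (rule Bochner_Integration.integral_cong[OF refl]) (simp add: l0_eq algebra_simps)
    also have "\<dots> = 1 * (\<integral>z. z * ?l z \<partial>?F) + (- 1 / \<sigma>) * (\<integral>z. z * z \<partial>?F)"
      by (rule lin2[OF izl izz])
    finally show ?thesis using sg0 by (simp add: m2 Ezz)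
  qed
  show I5: "(\<integral>z. sst z \<partial>?F) = 0"
  proof -
    have "(\<integral>z. sst z \<partial>?F) = (1 / Ed) * (\<integral>z. h0 z \<partial>?F) + (\<sigma> * c / Ed) * (\<integral>z. l0 z \<partial>?F)"
      unfolding sst_eq by (rule lin2[OF ih0 il0])
    thus ?thesis by (simp add: I1 I3)
  qed
  show I6: "(\<integral>z. z * sst z \<partial>?F) = 0"
  proof -
    have "(\<integral>z. z * sst z \<partial>?F) = (\<integral>z. (1 / Ed) * (z * h0 z) + (\<sigma> * c / Ed) * (z * l0 z) \<partial>?F)"
      by (rule Bochner_Integration.integral_cong[OF refl]) (simp add: sst_eq algebra_simps)
    also have "\<dots> = (1 / Ed) * (\<integral>z. z * h0 z \<partial>?F) + (\<sigma> * c / Ed) * (\<integral>z. z * l0 z \<partial>?F)"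
      by (rule lin2[OF izh0 izl0])
    finally show ?thesis by (simp add: I2 I4)
  qed
  have isst: "integrable ?F sst" by (rule int[OF sL2])
  show I7: "(\<integral>z. B z \<partial>?F) = 0"
  proof -
    have "(\<integral>z. B z \<partial>?F) = 1 * (\<integral>z. sst z \<partial>?F) + T * (\<integral>z. ?l z \<partial>?F)"
      unfolding B_eq by (rule lin2[OF isst il])
    thus ?thesis by (simp add: I5 m1)
  qed
  have I8: "(\<integral>z. h0 z * ?l z \<partial>?F) = c"
  proof -
    have "(\<integral>z. h0 z * ?l z \<partial>?F) = (\<integral>z. 1 * (h0 z * l0 z) + (1 / \<sigma>) * (z * h0 z) \<partial>?F)"
      by (rule Bochner_Integration.integral_cong[OF refl]) (simp add: l0_eq algebra_simps)
    also have "\<dots> = 1 * (\<integral>z. h0 z * l0 z \<partial>?F) + (1 / \<sigma>) * (\<integral>z. z * h0 z \<partial>?F)"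
      by (rule lin2[OF ih0l0 izh0])
    finally show ?thesis by (simp add: I2 c_eq)
  qed
  have I9: "(\<integral>z. l0 z * ?l z \<partial>?F) = J - 1 / \<sigma>"
  proof -
    have "(\<integral>z. l0 z * ?l z \<partial>?F) = (\<integral>z. 1 * (?l z * ?l z) + (- 1 / \<sigma>) * (z * ?l z) \<partial>?F)"
      by (rule Bochner_Integration.integral_cong[OF refl]) (simp add: l0_eq algebra_simps)
    also have "\<dots> = 1 * (\<integral>z. ?l z * ?l z \<partial>?F) + (- 1 / \<sigma>) * (\<integral>z. z * ?l z \<partial>?F)"
      by (rule lin2[OF ill izl])
    finally show ?thesis by (simp add: J_def m2)
  qed
  show I10: "(\<integral>z. B z * ?l z \<partial>?F) = 0"
  proof -
    have "(\<integral>z. B z * ?l z \<partial>?F) = (\<integral>z. (1 / Ed) * (h0 z * ?l z) + (\<sigma> * c / Ed) * (l0 z * ?l z) + T * (?l z * ?l z) \<partial>?F)"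
      by (rule Bochner_Integration.integral_cong[OF refl]) (simp add: B_def sst_eq algebra_simps)
    also have "\<dots> = (1 / Ed) * (\<integral>z. h0 z * ?l z \<partial>?F) + (\<sigma> * c / Ed) * (\<integral>z. l0 z * ?l z \<partial>?F) + T * (\<integral>z. ?l z * ?l z \<partial>?F)"
      by (rule lin3[OF ih0l il0l ill])
    also have "\<dots> = 0" using sg0 Ed
      by (simp add: I8 I9 J_def[symmetric] T_def \<sigma>_def[symmetric] field_simps)
    finally show ?thesis .
  qed
  show "Ed * (\<integral>z. B z * s z \<partial>?F) = (\<integral>z. h0 z * s z \<partial>?F)"
    if sL: "L2 ?F s" and zs: "(\<integral>z. z * s z \<partial>?F) = 0" and s0: "(\<integral>z. s z \<partial>?F) = 0" for s
  proof -
    have ih0s: "integrable ?F (\<lambda>x. h0 x * s x)" by (rule L2_mult[OF h0L2 sL])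
    have il0s: "integrable ?F (\<lambda>x. l0 x * s x)" by (rule L2_mult[OF l0L2 sL])
    have ils: "integrable ?F (\<lambda>x. ?l x * s x)" by (rule L2_mult[OF lL2 sL])
    have izs: "integrable ?F (\<lambda>x. x * s x)" by (rule L2_mult[OF zL2 sL])
    have A: "(\<integral>z. l0 z * s z \<partial>?F) = (\<integral>z. ?l z * s z \<partial>?F)"
    proof -
      have "(\<integral>z. l0 z * s z \<partial>?F) = (\<integral>z. 1 * (?l z * s z) + (- 1 / \<sigma>) * (z * s z) \<partial>?F)"
        by (rule Bochner_Integration.integral_cong[OF refl]) (simp add: l0_eq algebra_simps)
      also have "\<dots> = 1 * (\<integral>z. ?l z * s z \<partial>?F) + (- 1 / \<sigma>) * (\<integral>z. z * s z \<partial>?F)"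
        by (rule lin2[OF ils izs])
      finally show ?thesis by (simp add: zs)
    qed
    have "(\<integral>z. B z * s z \<partial>?F) = (\<integral>z. (1 / Ed) * (h0 z * s z) + (\<sigma> * c / Ed) * (l0 z * s z) + T * (?l z * s z) \<partial>?F)"
      by (rule Bochner_Integration.integral_cong[OF refl]) (simp add: B_def sst_eq algebra_simps)
    also have "\<dots> = (1 / Ed) * (\<integral>z. h0 z * s z \<partial>?F) + (\<sigma> * c / Ed) * (\<integral>z. l0 z * s z \<partial>?F) + T * (\<integral>z. ?l z * s z \<partial>?F)"
      by (rule lin3[OF ih0s il0s ils])
    finally show ?thesis using Ed
      by (simp add: A T_def \<sigma>_def[symmetric] field_simps)
  qed
qed


lemma PLT:
  fixes G :: "(real^'m) measure" and \<pi> :: "real^'m \<Rightarrow> real" and f B :: "real \<Rightarrow> real"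
    and a :: "real^'m \<Rightarrow> real"
  assumes sG: "sigma_finite_measure G"
    and \<pi>m: "\<pi> \<in> borel_measurable G"
    and fm: "f \<in> borel_measurable borel" and fn: "\<And>z. 0 \<le> f z"
    and am: "a \<in> borel_measurable G"
    and Bm: "B \<in> borel_measurable borel"
    and ia: "integrable G (\<lambda>x. max 0 (\<pi> x) * a x)"
    and iB: "integrable (err_dist f) B"
  shows "integrable (joint_law G \<pi> f) (\<lambda>\<omega>. (if fst (snd \<omega>) then a (fst \<omega>) else 0) * B (snd (snd \<omega>)))"
    "(\<integral>\<omega>. (if fst (snd \<omega>) then a (fst \<omega>) else 0) * B (snd (snd \<omega>)) \<partial>joint_law G \<pi> f) =
       (\<integral>x. max 0 (\<pi> x) * a x \<partial>G) * (\<integral>z. B z \<partial>err_dist f)"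
proof -
  have Am1: "(\<lambda>x. (\<lambda>x d. if d then a x else 0) x True) \<in> borel_measurable G" using am by simp
  have Am2: "(\<lambda>x. (\<lambda>x d. if d then a x else 0::real) x False) \<in> borel_measurable G" by simp
  have i1: "integrable G (\<lambda>x. max 0 (\<pi> x) * (\<lambda>x d. if d then a x else 0) x True)" using ia by simp
  have i2: "integrable G (\<lambda>x. max 0 (1 - \<pi> x) * (\<lambda>x d. if d then a x else 0::real) x False)" by simp
  note P = PL[OF sG \<pi>m fm fn Am1 Am2 Bm i1 i2 iB]
  show "integrable (joint_law G \<pi> f) (\<lambda>\<omega>. (if fst (snd \<omega>) then a (fst \<omega>) else 0) * B (snd (snd \<omega>)))"
    using P(1) by simp
  show "(\<integral>\<omega>. (if fst (snd \<omega>) then a (fst \<omega>) else 0) * B (snd (snd \<omega>)) \<partial>joint_law G \<pi> f) =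
       (\<integral>x. max 0 (\<pi> x) * a x \<partial>G) * (\<integral>z. B z \<partial>err_dist f)"
    using P(2) by simp
qed

lemma PL1:
  fixes G :: "(real^'m) measure" and \<pi> :: "real^'m \<Rightarrow> real" and f B :: "real \<Rightarrow> real"
  assumes sG: "sigma_finite_measure G"
    and \<pi>m: "\<pi> \<in> borel_measurable G"
    and fm: "f \<in> borel_measurable borel" and fn: "\<And>z. 0 \<le> f z"
    and Bm: "B \<in> borel_measurable borel"
    and ia: "integrable G (\<lambda>x. max 0 (\<pi> x))" and ib: "integrable G (\<lambda>x. max 0 (1 - \<pi> x))"
    and iB: "integrable (err_dist f) B"
  shows "(\<integral>\<omega>. B (snd (snd \<omega>)) \<partial>joint_law G \<pi> f) =
       ((\<integral>x. max 0 (\<pi> x) \<partial>G) + (\<integral>x. max 0 (1 - \<pi> x) \<partial>G)) * (\<integral>z. B z \<partial>err_dist f)"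
proof -
  have Am1: "(\<lambda>x. (\<lambda>x d. 1::real) x True) \<in> borel_measurable G" by simp
  have Am2: "(\<lambda>x. (\<lambda>x d. 1::real) x False) \<in> borel_measurable G" by simp
  have i1: "integrable G (\<lambda>x. max 0 (\<pi> x) * (\<lambda>x d. 1::real) x True)" using ia by simp
  have i2: "integrable G (\<lambda>x. max 0 (1 - \<pi> x) * (\<lambda>x d. 1::real) x False)" using ib by simp
  note P = PL[OF sG \<pi>m fm fn Am1 Am2 Bm i1 i2 iB]
  show ?thesis using P(2) by simp
qed


theorem lemma1:
  fixes G :: "(real^'m) measure" and \<pi> :: "real^'m \<Rightarrow> real"
    and f f' h :: "real \<Rightarrow> real"
  assumes G_prob: "prob_space G" and G_sets: "sets G = sets borel"
    and G_cube: "AE x in G. x \<in> unit_cube"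
    and \<pi>_meas: "\<pi> \<in> borel_measurable borel"
    and \<pi>_range: "\<And>x. x \<in> unit_cube \<Longrightarrow> 0 < \<pi> x \<and> \<pi> x \<le> 1"
    and f_nonneg: "\<And>z. 0 \<le> f z" and f_meas: "f \<in> borel_measurable borel"
    and f_int: "integrable lborel f" and f_int1: "(\<integral>z. f z \<partial>lborel) = 1"
    and f_mean_int: "integrable (err_dist f) (\<lambda>z. z)"
    and f_mean0: "(\<integral>z. z \<partial>err_dist f) = 0"
    and f_var: "integrable (err_dist f) (\<lambda>z. z^2)"
    and f_abs_cont: "\<And>a b. a \<le> b \<Longrightarrow>
          f' absolutely_integrable_on {a..b} \<and> integral {a..b} f' = f b - f a"
    and fisher: "L2 (err_dist f) (score f f')"
    and h_L2: "L2 (err_dist f) h"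
  shows "((\<lambda>_. 0), s_star G \<pi> f f' h, t_star G \<pi> f f' h, (\<lambda>_. 0)) \<in> tangent_index G \<pi> f
       \<and> g_star G \<pi> f f' h = d_score (score f f') \<pi> ((\<lambda>_. 0), s_star G \<pi> f f' h, t_star G \<pi> f f' h, (\<lambda>_. 0))
       \<and> is_canonical_gradient G \<pi> f (score f f') (h0_of f h) (g_star G \<pi> f f' h)"
proof -
  let ?F = "err_dist f" and ?l = "score f f'" and ?P = "joint_law G \<pi> f"
  define Ed where "Ed = resp_prob G \<pi>"
  define h0 where "h0 = h0_of f h"
  define l0 where "l0 = l0_of f f'"
  define c where "c = (\<integral>e. h0_of f h e * l0_of f f' e \<partial>err_dist f)"
  define T where "T = - err_var f / Ed * c"
  define sst where "sst = (\<lambda>z. (1 / Ed) * (h0 z + err_var f * c * l0 z))"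
  define Bf where "Bf = (\<lambda>z. sst z + score f f' z * T)"
  interpret Gp: prob_space G by (rule G_prob)
  have sG: "sigma_finite_measure G" by (rule prob_space_imp_sigma_finite[OF G_prob])
  have finG: "finite_measure G" by (rule Gp.finite_measure_axioms)
  have mG: "(\<phi> \<in> borel_measurable G) = (\<phi> \<in> borel_measurable borel)" for \<phi> :: "real^'m \<Rightarrow> real"
    by (simp add: measurable_cong_sets[OF G_sets refl])
  have \<pi>G: "\<pi> \<in> borel_measurable G" using \<pi>_meas mG by simp
  have AE\<pi>: "AE x in G. 0 < \<pi> x \<and> \<pi> x \<le> 1" using G_cube by eventually_elim (rule \<pi>_range)
  have "AE x in G. norm (\<pi> x) \<le> 1" using AE\<pi> by eventually_elim simp
  hence i\<pi>: "integrable G \<pi>" by (rule Gp.integrable_const_bound[OF _ \<pi>G])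
  have max\<pi>: "AE x in G. max 0 (\<pi> x) = \<pi> x" using AE\<pi> by eventually_elim simp
  have max1\<pi>: "AE x in G. max 0 (1 - \<pi> x) = 1 - \<pi> x" using AE\<pi> by eventually_elim simp
  have mm1: "(\<lambda>x. max 0 (\<pi> x)) \<in> borel_measurable G" using \<pi>G by measurable
  have mm2: "(\<lambda>x. max 0 (1 - \<pi> x)) \<in> borel_measurable G" using \<pi>G by measurable
  have "AE x in G. \<pi> x = max 0 (\<pi> x)" using AE\<pi> by eventually_elim simp
  hence i\<pi>max: "integrable G (\<lambda>x. max 0 (\<pi> x))" by (rule integrable_AE_eq[OF i\<pi> mm1])
  have "AE x in G. norm (max 0 (1 - \<pi> x)) \<le> 1" using AE\<pi> by eventually_elim simp
  hence i1\<pi>max: "integrable G (\<lambda>x. max 0 (1 - \<pi> x))" by (rule Gp.integrable_const_bound[OF _ mm2])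
  have Ed_eq: "Ed = (\<integral>x. \<pi> x \<partial>G)" by (simp add: Ed_def resp_prob_def)
  have Ed_max: "(\<integral>x. max 0 (\<pi> x) \<partial>G) = Ed"
    unfolding Ed_eq by (rule integral_cong_AE[OF mm1 \<pi>G max\<pi>])
  have Ed_pos: "0 < Ed"
  proof -
    have nn: "AE x in G. 0 \<le> \<pi> x" using AE\<pi> by eventually_elim simp
    have "0 \<le> Ed" unfolding Ed_eq by (rule integral_nonneg_AE[OF nn])
    moreover have "Ed \<noteq> 0"
    proof
      assume "Ed = 0"
      hence "AE x in G. \<pi> x = 0" using integral_nonneg_eq_0_iff_AE[OF i\<pi> nn] Ed_eq by simp
      with AE\<pi> have "AE x in G. False" by eventually_elim simp
      thus False by simp
    qed
    ultimately show ?thesis by simp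
  qed
  have sum1: "(\<integral>x. max 0 (\<pi> x) \<partial>G) + (\<integral>x. max 0 (1 - \<pi> x) \<partial>G) = 1"
  proof -
    have "(\<integral>x. max 0 (\<pi> x) \<partial>G) + (\<integral>x. max 0 (1 - \<pi> x) \<partial>G) = (\<integral>x. max 0 (\<pi> x) + max 0 (1 - \<pi> x) \<partial>G)"
      by (rule Bochner_Integration.integral_add[symmetric, OF i\<pi>max i1\<pi>max])
    also have "\<dots> = (\<integral>x. 1 \<partial>G)"
    proof (rule integral_cong_AE)
      show "(\<lambda>x. max 0 (\<pi> x) + max 0 (1 - \<pi> x)) \<in> borel_measurable G" using \<pi>G by measurable
      show "AE x in G. max 0 (\<pi> x) + max 0 (1 - \<pi> x) = 1" using AE\<pi> by eventually_elim simp
    qed simp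
    also have "\<dots> = 1" by (simp add: Gp.prob_space)
    finally show ?thesis .
  qed
  have Fp: "prob_space ?F" by (rule err_dist_prob[OF f_meas f_nonneg f_int f_int1])
  interpret Fp: prob_space ?F by (rule Fp)
  have finF: "finite_measure ?F" by (rule Fp.finite_measure_axioms)
  note mom = score_moments[OF f_nonneg f_meas f_int f_int1 f_mean_int f_var f_abs_cont fisher]
  have sig: "0 < err_var f" by (rule var_pos[OF f_meas f_nonneg f_int f_int1 f_var])
  have zL2: "L2 ?F (\<lambda>z. z)" unfolding L2_def err_dist_meas using f_var by simp
  note fc = F_calcs[OF Fp Ed_pos sig f_mean0 zL2 fisher h_L2 mom(1) mom(2) h0_def l0_def c_def T_def sst_def Bf_def]
  have sst_eq: "s_star G \<pi> f f' h = sst"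
    by (simp add: s_star_def sst_def h0_def l0_def c_def Ed_def fun_eq_iff)
  have tst_eq: "t_star G \<pi> f f' h = (\<lambda>x. T)"
    by (simp add: t_star_def T_def c_def Ed_def fun_eq_iff)
  have gst_eq: "g_star G \<pi> f f' h = (\<lambda>\<omega>. (if fst (snd \<omega>) then 1 else 0) * Bf (snd (snd \<omega>)))"
    by (auto simp: g_star_def sst_eq tst_eq Bf_def fun_eq_iff)
  have dsc: "g_star G \<pi> f f' h = d_score (score f f') \<pi> ((\<lambda>_. 0), s_star G \<pi> f f' h, t_star G \<pi> f f' h, (\<lambda>_. 0))"
    by (auto simp: g_star_def d_score_def fun_eq_iff)
  have BfL2: "L2 ?F Bf" by (rule fc(2))
  have Bfm: "Bf \<in> borel_measurable borel" using BfL2 unfolding L2_def err_dist_meas by simp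
  have TI: "((\<lambda>_. 0), s_star G \<pi> f f' h, t_star G \<pi> f f' h, (\<lambda>_. 0)) \<in> tangent_index G \<pi> f"
  proof -
    have a: "L2 G (\<lambda>_. 0)" by (rule L2_const[OF finG])
    have b: "s_star G \<pi> f f' h \<in> S_set f" unfolding sst_eq S_set_def using fc(1,3,4) by simp
    have c: "L2 (G1 G \<pi>) (\<lambda>x. T)"
    proof -
      have gm: "(\<lambda>x. \<pi> x / resp_prob G \<pi>) \<in> borel_measurable G" using \<pi>G by measurable
      have gn: "AE x in G. 0 \<le> \<pi> x / resp_prob G \<pi>"
        using AE\<pi> by eventually_elim (use Ed_pos[unfolded Ed_def] in simp)
      have "integrable G (\<lambda>x. (\<pi> x / resp_prob G \<pi>) *\<^sub>R T\<^sup>2)" using i\<pi> by simp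
      hence "integrable (G1 G \<pi>) (\<lambda>x. T\<^sup>2)"
        unfolding G1_def using integrable_density[OF _ gm gn, of "\<lambda>x. T\<^sup>2"] by simp
      moreover have "(\<lambda>x. T) \<in> borel_measurable (G1 G \<pi>)" by simp
      ultimately show ?thesis unfolding L2_def by simp
    qed
    have d: "L2 (Gpi G \<pi>) (\<lambda>_. 0)" unfolding L2_def by (intro conjI borel_measurable_const) simp
    show ?thesis unfolding tangent_index_def tst_eq using a b c d by simp
  qed
  have gL2: "L2 ?P (g_star G \<pi> f f' h)"
  proof -
    have Bf2m: "(\<lambda>z. (Bf z)\<^sup>2) \<in> borel_measurable borel" using Bfm by measurable
    have iBf2: "integrable ?F (\<lambda>z. (Bf z)\<^sup>2)" using BfL2 unfolding L2_def by simp
    have one_m: "(\<lambda>x::real^'m. 1::real) \<in> borel_measurable G" by simp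
    have ione: "integrable G (\<lambda>x. max 0 (\<pi> x) * 1)" using i\<pi>max by simp
    have iBf: "integrable ?F Bf" by (rule L2_int[OF finF BfL2])
    have p1: "integrable ?P (\<lambda>\<omega>. (if fst (snd \<omega>) then 1 else 0) * Bf (snd (snd \<omega>)))"
      using PLT(1)[OF sG \<pi>G f_meas f_nonneg one_m Bfm ione iBf] by simp
    have p2: "integrable ?P (\<lambda>\<omega>. (if fst (snd \<omega>) then 1 else 0) * (Bf (snd (snd \<omega>)))\<^sup>2)"
      using PLT(1)[OF sG \<pi>G f_meas f_nonneg one_m Bf2m ione iBf2] by simp
    have eq2: "(\<lambda>\<omega>. ((if fst (snd \<omega>) then 1 else 0) * Bf (snd (snd \<omega>)))\<^sup>2) =
        (\<lambda>\<omega>. (if fst (snd \<omega>) then 1 else 0) * (Bf (snd (snd \<omega>)))\<^sup>2)"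
      by (auto simp: fun_eq_iff)
    show ?thesis unfolding L2_def gst_eq eq2 using p1 p2 by auto
  qed
  have GE: "(\<integral>\<omega>. h0_of f h (snd (snd \<omega>)) * fst (snd \<gamma>) (snd (snd \<omega>)) \<partial>?P)
        = (\<integral>\<omega>. g_star G \<pi> f f' h \<omega> * d_score (score f f') \<pi> \<gamma> \<omega> \<partial>?P)"
    if \<gamma>: "\<gamma> \<in> tangent_index G \<pi> f" for \<gamma>
  proof -
    obtain u s t w where \<gamma>eq: "\<gamma> = (u, s, t, w)" and uL2: "L2 G u" and sS: "s \<in> S_set f"
      and tL2: "L2 (G1 G \<pi>) t" and wL2: "L2 (Gpi G \<pi>) w"
      using \<gamma> unfolding tangent_index_def by auto
    have sL2: "L2 ?F s" and s0: "(\<integral>z. s z \<partial>?F) = 0" and zs: "(\<integral>z. z * s z \<partial>?F) = 0"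
      using sS unfolding S_set_def by auto
    have sm: "s \<in> borel_measurable borel" using sL2 unfolding L2_def err_dist_meas by simp
    have um: "u \<in> borel_measurable G" using uL2 unfolding L2_def by simp
    have iu: "integrable G u" by (rule L2_int[OF finG uL2])
    have tm: "t \<in> borel_measurable G"
      using tL2 unfolding L2_def G1_def by (simp add: measurable_cong_sets[OF sets_density refl])
    have wm: "w \<in> borel_measurable G"
      using wL2 unfolding L2_def Gpi_def by (simp add: measurable_cong_sets[OF sets_density refl])
    have it2: "integrable G (\<lambda>x. \<pi> x * (t x)\<^sup>2)"
    proof -
      have gm: "(\<lambda>x. \<pi> x / Ed) \<in> borel_measurable G" using \<pi>G by measurable
      have gn: "AE x in G. 0 \<le> \<pi> x / Ed" using AE\<pi> by eventually_elim (use Ed_pos in simp)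
      have t2m: "(\<lambda>x. (t x)\<^sup>2) \<in> borel_measurable G" using tm by measurable
      have "integrable (G1 G \<pi>) (\<lambda>x. (t x)\<^sup>2)" using tL2 unfolding L2_def by simp
      hence "integrable G (\<lambda>x. (\<pi> x / Ed) *\<^sub>R (t x)\<^sup>2)"
        unfolding G1_def Ed_def[symmetric] using integrable_density[OF t2m gm gn] by simp
      hence "integrable G (\<lambda>x. (\<pi> x / Ed) * (t x)\<^sup>2)" by simp
      hence "integrable G (\<lambda>x. Ed * ((\<pi> x / Ed) * (t x)\<^sup>2))" by (rule integrable_mult_right)
      moreover have "(\<lambda>x. Ed * ((\<pi> x / Ed) * (t x)\<^sup>2)) = (\<lambda>x. \<pi> x * (t x)\<^sup>2)"
        using Ed_pos by (auto simp: fun_eq_iff)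
      ultimately show ?thesis by simp
    qed
    have iw2: "integrable G (\<lambda>x. (\<pi> x * (1 - \<pi> x)) * (w x)\<^sup>2)"
    proof -
      have gm: "(\<lambda>x. \<pi> x * (1 - \<pi> x)) \<in> borel_measurable G" using \<pi>G by measurable
      have gn: "AE x in G. 0 \<le> \<pi> x * (1 - \<pi> x)" using AE\<pi> by eventually_elim simp
      have w2m: "(\<lambda>x. (w x)\<^sup>2) \<in> borel_measurable G" using wm by measurable
      have "integrable (Gpi G \<pi>) (\<lambda>x. (w x)\<^sup>2)" using wL2 unfolding L2_def by simp
      thus ?thesis unfolding Gpi_def using integrable_density[OF w2m gm gn] by simp
    qed
    have ppm: "(\<lambda>x. \<pi> x * (1 - \<pi> x)) \<in> borel_measurable G" using \<pi>G by measurable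
    have "AE x in G. norm (\<pi> x * (1 - \<pi> x)) \<le> 1" using AE\<pi>
    proof eventually_elim
      case (elim x)
      hence "0 \<le> \<pi> x * (1 - \<pi> x)" "\<pi> x * (1 - \<pi> x) \<le> 1 * 1"
        by (simp, intro mult_mono) auto
      thus ?case by simp
    qed
    hence ipp: "integrable G (\<lambda>x. \<pi> x * (1 - \<pi> x))" by (rule Gp.integrable_const_bound[OF _ ppm])
    have iA1: "integrable G (\<lambda>x. max 0 (\<pi> x) * (u x + (1 - \<pi> x) * w x))"
    proof -
      have i1: "integrable G (\<lambda>x. \<pi> x * u x)"
      proof (rule Bochner_Integration.integrable_bound[OF iu])
        show "(\<lambda>x. \<pi> x * u x) \<in> borel_measurable G" using \<pi>G um by measurable
        show "AE x in G. norm (\<pi> x * u x) \<le> norm (u x)"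
          using AE\<pi> by eventually_elim (auto simp: abs_mult intro: mult_left_le_one_le)
      qed
      have i2: "integrable G (\<lambda>x. \<pi> x * (1 - \<pi> x) * w x)"
      proof (rule Bochner_Integration.integrable_bound[OF Bochner_Integration.integrable_add[OF ipp iw2]])
        show "(\<lambda>x. \<pi> x * (1 - \<pi> x) * w x) \<in> borel_measurable G" using \<pi>G wm by measurable
        show "AE x in G. norm (\<pi> x * (1 - \<pi> x) * w x) \<le> norm (\<pi> x * (1 - \<pi> x) + \<pi> x * (1 - \<pi> x) * (w x)\<^sup>2)"
          using AE\<pi>
        proof eventually_elim
          case (elim x)
          define p where "p = \<pi> x * (1 - \<pi> x)"
          have p0: "0 \<le> p" using elim by (simp add: p_def)
          have "\<bar>w x\<bar> \<le> 1 + (w x)\<^sup>2" using abs_mult_le_sq[of 1 "w x"] by simp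
          hence "p * \<bar>w x\<bar> \<le> p * (1 + (w x)\<^sup>2)" by (rule mult_left_mono) (rule p0)
          moreover have "0 \<le> p + p * (w x)\<^sup>2" using p0 by simp
          ultimately have "norm (p * w x) \<le> norm (p + p * (w x)\<^sup>2)" using p0 by (simp add: abs_mult distrib_left)
          thus ?case unfolding p_def .
        qed
      qed
      have "integrable G (\<lambda>x. \<pi> x * u x + \<pi> x * (1 - \<pi> x) * w x)"
        by (rule Bochner_Integration.integrable_add[OF i1 i2])
      moreover have "(\<lambda>x. max 0 (\<pi> x) * (u x + (1 - \<pi> x) * w x)) \<in> borel_measurable G"
        using \<pi>G um wm by measurable
      moreover have "AE x in G. \<pi> x * u x + \<pi> x * (1 - \<pi> x) * w x = max 0 (\<pi> x) * (u x + (1 - \<pi> x) * w x)"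
        using AE\<pi> by eventually_elim (simp add: algebra_simps)
      ultimately show ?thesis by (rule integrable_AE_eq)
    qed
    have iA3: "integrable G (\<lambda>x. max 0 (\<pi> x) * t x)"
    proof -
      have "integrable G (\<lambda>x. \<pi> x * t x)"
      proof (rule Bochner_Integration.integrable_bound[OF Bochner_Integration.integrable_add[OF i\<pi> it2]])
        show "(\<lambda>x. \<pi> x * t x) \<in> borel_measurable G" using \<pi>G tm by measurable
        show "AE x in G. norm (\<pi> x * t x) \<le> norm (\<pi> x + \<pi> x * (t x)\<^sup>2)"
          using AE\<pi>
        proof eventually_elim
          case (elim x)
          have p0: "0 \<le> \<pi> x" using elim by simp
          have "\<bar>t x\<bar> \<le> 1 + (t x)\<^sup>2" using abs_mult_le_sq[of 1 "t x"] by simp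
          hence "\<pi> x * \<bar>t x\<bar> \<le> \<pi> x * (1 + (t x)\<^sup>2)" by (rule mult_left_mono) (rule p0)
          moreover have "0 \<le> \<pi> x + \<pi> x * (t x)\<^sup>2" using p0 by simp
          ultimately show ?case using p0 by (simp add: abs_mult distrib_left)
        qed
      qed
      moreover have "(\<lambda>x. max 0 (\<pi> x) * t x) \<in> borel_measurable G" using \<pi>G tm by measurable
      moreover have "AE x in G. \<pi> x * t x = max 0 (\<pi> x) * t x" using AE\<pi> by eventually_elim simp
      ultimately show ?thesis by (rule integrable_AE_eq)
    qed
    have iBf: "integrable ?F Bf" by (rule L2_int[OF finF BfL2])
    have iBfs: "integrable ?F (\<lambda>x. Bf x * s x)" by (rule L2_mult[OF BfL2 sL2])
    have iBfl: "integrable ?F (\<lambda>x. Bf x * ?l x)" by (rule L2_mult[OF BfL2 fisher])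
    have lm: "?l \<in> borel_measurable borel" using fisher unfolding L2_def err_dist_meas by simp
    have Bfsm: "(\<lambda>x. Bf x * s x) \<in> borel_measurable borel" using Bfm sm by measurable
    have Bflm: "(\<lambda>x. Bf x * ?l x) \<in> borel_measurable borel" using Bfm lm by measurable
    have a1m: "(\<lambda>x. u x + (1 - \<pi> x) * w x) \<in> borel_measurable G" using um \<pi>G wm by measurable
    have one_m: "(\<lambda>x::real^'m. 1::real) \<in> borel_measurable G" by simp
    have ione: "integrable G (\<lambda>x. max 0 (\<pi> x) * 1)" using i\<pi>max by simp
    note P1 = PLT[OF sG \<pi>G f_meas f_nonneg a1m Bfm iA1 iBf]
    note P2 = PLT[OF sG \<pi>G f_meas f_nonneg one_m Bfsm ione iBfs]
    note P3 = PLT[OF sG \<pi>G f_meas f_nonneg tm Bflm iA3 iBfl]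
    have h0m: "h0 \<in> borel_measurable borel" using fc(7) unfolding L2_def err_dist_meas by simp
    have h0s_m: "(\<lambda>z. h0 z * s z) \<in> borel_measurable borel"
      by (rule borel_measurable_times[OF h0m sm])
    have ih0s: "integrable ?F (\<lambda>x. h0 x * s x)" by (rule L2_mult[OF fc(7) sL2])
    have LHS: "(\<integral>\<omega>. h0 (snd (snd \<omega>)) * s (snd (snd \<omega>)) \<partial>?P) = (\<integral>z. h0 z * s z \<partial>?F)"
      using PL1[OF sG \<pi>G f_meas f_nonneg h0s_m i\<pi>max i1\<pi>max ih0s] sum1 by simp
    have pw: "g_star G \<pi> f f' h \<omega> * d_score (score f f') \<pi> \<gamma> \<omega> =
        (if fst (snd \<omega>) then u (fst \<omega>) + (1 - \<pi> (fst \<omega>)) * w (fst \<omega>) else 0) * Bf (snd (snd \<omega>))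
        + (if fst (snd \<omega>) then 1 else 0) * (Bf (snd (snd \<omega>)) * s (snd (snd \<omega>)))
        + (if fst (snd \<omega>) then t (fst \<omega>) else 0) * (Bf (snd (snd \<omega>)) * ?l (snd (snd \<omega>)))" for \<omega>
      by (cases \<omega>) (auto simp: gst_eq \<gamma>eq d_score_def algebra_simps)
    have "(\<integral>\<omega>. g_star G \<pi> f f' h \<omega> * d_score (score f f') \<pi> \<gamma> \<omega> \<partial>?P) =
        (\<integral>\<omega>. (if fst (snd \<omega>) then u (fst \<omega>) + (1 - \<pi> (fst \<omega>)) * w (fst \<omega>) else 0) * Bf (snd (snd \<omega>))
        + (if fst (snd \<omega>) then 1 else 0) * (Bf (snd (snd \<omega>)) * s (snd (snd \<omega>)))
        + (if fst (snd \<omega>) then t (fst \<omega>) else 0) * (Bf (snd (snd \<omega>)) * ?l (snd (snd \<omega>))) \<partial>?P)"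
      by (simp only: pw)
    also have "\<dots> = (\<integral>\<omega>. (if fst (snd \<omega>) then u (fst \<omega>) + (1 - \<pi> (fst \<omega>)) * w (fst \<omega>) else 0) * Bf (snd (snd \<omega>)) \<partial>?P)
        + (\<integral>\<omega>. (if fst (snd \<omega>) then 1 else 0) * (Bf (snd (snd \<omega>)) * s (snd (snd \<omega>))) \<partial>?P)
        + (\<integral>\<omega>. (if fst (snd \<omega>) then t (fst \<omega>) else 0) * (Bf (snd (snd \<omega>)) * ?l (snd (snd \<omega>))) \<partial>?P)"
      by (subst Bochner_Integration.integral_add[OF Bochner_Integration.integrable_add[OF P1(1) P2(1)] P3(1)],
          subst Bochner_Integration.integral_add[OF P1(1) P2(1)], rule refl)
    also have "\<dots> = Ed * (\<integral>z. Bf z * s z \<partial>?F)"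
      by (simp only: P1(2) P2(2) P3(2) fc(5) fc(6) Ed_max[unfolded mult_1_right[symmetric]])
         (simp add: Ed_max)
    also have "\<dots> = (\<integral>z. h0 z * s z \<partial>?F)" by (rule fc(8)) (simp_all add: sL2 zs s0)
    finally show ?thesis using LHS by (simp add: \<gamma>eq h0_def)
  qed
  show ?thesis
  proof (intro conjI)
    show "((\<lambda>_. 0), s_star G \<pi> f f' h, t_star G \<pi> f f' h, (\<lambda>_. 0)) \<in> tangent_index G \<pi> f" by (rule TI)
    show "g_star G \<pi> f f' h = d_score (score f f') \<pi> ((\<lambda>_. 0), s_star G \<pi> f f' h, t_star G \<pi> f f' h, (\<lambda>_. 0))"
      by (rule dsc)
    show "is_canonical_gradient G \<pi> f (score f f') (h0_of f h) (g_star G \<pi> f f' h)"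
      unfolding is_canonical_gradient_def
    proof (intro conjI allI impI ballI)
      show "L2 ?P (g_star G \<pi> f f' h)" by (rule gL2)
      fix e :: real assume e: "0 < e"
      show "\<exists>\<gamma>\<in>tangent_index G \<pi> f. L2 ?P (d_score (score f f') \<pi> \<gamma>) \<and>
          (\<integral>\<omega>. (g_star G \<pi> f f' h \<omega> - d_score (score f f') \<pi> \<gamma> \<omega>)\<^sup>2 \<partial>?P) < e"
        by (rule bexI[OF _ TI]) (simp add: dsc[symmetric] gL2 e)
    next
      fix \<gamma> assume "\<gamma> \<in> tangent_index G \<pi> f"
      thus "(\<integral>\<omega>. h0_of f h (snd (snd \<omega>)) * fst (snd \<gamma>) (snd (snd \<omega>)) \<partial>?P)
        = (\<integral>\<omega>. g_star G \<pi> f f' h \<omega> * d_score (score f f') \<pi> \<gamma> \<omega> \<partial>?P)" by (rule GE)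
    qed
  qed
qed


end
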